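(* Let $\Omega\subset\mathbb{R}^2$ be a bounded convex domain with $C^2$-smooth boundary of strictly positive curvature. Then there are constants $c,C>0$ such that for all $z\in 2\Omega$, $$c\,\operatorname{dist}(z,2\partial\Omega)^{3/2}\le\omega_\Omega(z)\le C\,\operatorname{dist}(z,2\partial\Omega)^{3/2}.$$
   Context: $m$ is Lebesgue measure on $\mathbb{R}^2$, $2\Omega=\{2x:x\in\Omega\}$, $2\partial\Omega=\partial(2\Omega)$, and $\omega_\Omega(x)=m(\Omega\cap(x-\Omega))/\max_{y\in\mathbb{R}^2}m(\Omega\cap(y-\Omega))$. *)

theory Defs
  imports "HOL-Analysis.Analysis"
begin

definition scale2 :: "(real^2) set \<Rightarrow> (real^2) set" where
  "scale2 \<Omega> = (\<lambda>x. (2::real) *\<^sub>R x) ` \<Omega>"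

definition covariogram :: "(real^2) set \<Rightarrow> real^2 \<Rightarrow> real" where
  "covariogram \<Omega> x = measure lebesgue (\<Omega> \<inter> (\<lambda>w. x - w) ` \<Omega>)"

definition omega :: "(real^2) set \<Rightarrow> real^2 \<Rightarrow> real" where
  "omega \<Omega> x = covariogram \<Omega> x / (SUP y. covariogram \<Omega> y)"

definition cross2 :: "real^2 \<Rightarrow> real^2 \<Rightarrow> real" where
  "cross2 u v = u$1 * v$2 - u$2 * v$1"

text \<open>Omega has C^2 boundary of strictly positive curvature: the boundary is a
  simple closed regular C^2 curve (1-periodic parametrisation, injective on one
  period) whose signed curvature (cross2 g' g'')/|g'|^3 is strictly positive.\<close>
definition C2_pos_curv_boundary :: "(real^2) set \<Rightarrow> bool" where
  "C2_pos_curv_boundary \<Omega> \<longleftrightarrow>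
     (\<exists>\<gamma> \<gamma>' \<gamma>'' :: real \<Rightarrow> real^2.
        (\<forall>t. \<gamma> (t + 1) = \<gamma> t) \<and>
        inj_on \<gamma> {0..<1} \<and>
        frontier \<Omega> = \<gamma> ` {0..1} \<and>
        (\<forall>t. (\<gamma> has_vector_derivative \<gamma>' t) (at t)) \<and>
        (\<forall>t. (\<gamma>' has_vector_derivative \<gamma>'' t) (at t)) \<and>
        continuous_on UNIV \<gamma>'' \<and>
        (\<forall>t. \<gamma>' t \<noteq> 0) \<and>
        (\<forall>t. cross2 (\<gamma>' t) (\<gamma>'' t) / norm (\<gamma>' t) ^ 3 > 0))"

end

theory Submission
  imports Defs
begin


definition J :: "real^2 \<Rightarrow> real^2" where "J v = vector [- v$2, v$1]"

lemma inner2: "(x::real^2) \<bullet> y = x$1*y$1 + x$2*y$2"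
  by (simp add: inner_vec_def sum_2)

lemma J_comp[simp]: "J v $ 1 = - v$2" "J v $ 2 = v$1"
  by (simp_all add: J_def)

lemma J_inner_self[simp]: "J v \<bullet> v = 0" "v \<bullet> J v = 0"
  by (simp_all add: inner2)

lemma J_inner_J[simp]: "J v \<bullet> J u = v \<bullet> u"
  by (simp add: inner2)

lemma norm_J[simp]: "norm (J v) = norm v"
  by (simp add: norm_eq_sqrt_inner)

lemma J_cross: "w \<bullet> J v = cross2 v w"
  by (simp add: inner2 cross2_def)

lemma J_linear: "J (a *\<^sub>R v) = a *\<^sub>R J v" "J (-v) = - J v" "J (u - v) = J u - J v"
  by (simp_all add: vec_eq_iff forall_2)

lemma decomp2:
  assumes "norm (T::real^2) = 1"
  shows "x = (x \<bullet> T) *\<^sub>R T + (x \<bullet> J T) *\<^sub>R J T"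
proof -
  have "T$1*T$1 + T$2*T$2 = 1" using assms by (metis inner2 norm_eq_1)
  then show ?thesis
    unfolding vec_eq_iff forall_2 inner2 by simp algebra
qed


definition rect :: "real^2 \<Rightarrow> real^2 \<Rightarrow> real \<Rightarrow> real \<Rightarrow> (real^2) set" where
  "rect c T a b = {x. \<bar>(x - c) \<bullet> T\<bar> \<le> a \<and> \<bar>(x - c) \<bullet> J T\<bar> \<le> b}"

lemma rect_measure:
  assumes T: "norm T = 1" and a: "0 \<le> a" and b: "0 \<le> b"
  shows "rect c T a b \<in> lmeasurable \<and> measure lebesgue (rect c T a b) = 4 * a * b"
proof -
  define f where "f v = (v$1) *\<^sub>R T + (v$2) *\<^sub>R J T" for v :: "real^2"
  have TT: "T$1*T$1 + T$2*T$2 = 1" using T by (metis inner2 norm_eq_1)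
  have lin: "linear f"
    by (rule linearI) (simp_all add: f_def algebra_simps)
  have nf: "norm (f v) = norm v" for v
  proof -
    have "f v \<bullet> f v = v \<bullet> v"
      unfolding f_def inner2 by simp (use TT in algebra)
    then show ?thesis by (simp add: norm_eq_sqrt_inner)
  qed
  have orth: "orthogonal_transformation f"
    using lin nf by (simp add: orthogonal_transformation)
  define B where "B = cbox (vector [-a, -b]) (vector [a, b] :: real^2)"
  have fT: "f v \<bullet> T = v$1" and fJ: "f v \<bullet> J T = v$2" for v
    unfolding f_def by (simp_all add: inner2, use TT in algebra, use TT in algebra)
  have eq: "rect c T a b = (\<lambda>x. c + x) ` (f ` B)"
  proof (intro equalityI subsetI)
    fix x assume x: "x \<in> rect c T a b"
    define v where "v = (vector [(x - c) \<bullet> T, (x - c) \<bullet> J T] :: real^2)"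
    have "f v = x - c"
      unfolding f_def v_def using decomp2[OF T, of "x - c"] by simp
    moreover have "v \<in> B" using x
      by (auto simp: B_def v_def rect_def mem_box_cart forall_2)
    ultimately show "x \<in> (\<lambda>x. c + x) ` (f ` B)"
      by (metis (no_types, lifting) add.commute diff_add_cancel image_eqI)
  next
    fix x assume "x \<in> (\<lambda>x. c + x) ` (f ` B)"
    then obtain v where v: "v \<in> B" and x: "x = c + f v" by auto
    then show "x \<in> rect c T a b"
      by (auto simp: rect_def fT fJ B_def mem_box_cart forall_2)
  qed
  have Bm: "measure lebesgue B = 4 * a * b"
  proof -
    have "(vector [-a, -b] :: real^2) \<in> B" using a b by (auto simp: B_def mem_box_cart forall_2)
    then have "B \<noteq> {}" by auto
    then have "measure lborel B = (\<Prod>i\<in>UNIV. (vector [a, b] :: real^2)$i - (vector [-a, -b] :: real^2)$i)"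
      unfolding B_def by (rule content_cbox_cart)
    also have "\<dots> = 4 * a * b" by (simp add: UNIV_2)
    finally show ?thesis unfolding B_def by (subst measure_completion) auto
  qed
  have m1: "f ` B \<in> lmeasurable" "measure lebesgue (f ` B) = 4 * a * b"
    using measurable_orthogonal_image[OF orth] measure_orthogonal_image[OF orth] Bm
    by (auto simp: B_def)
  then show ?thesis
    unfolding eq using measure_translation[of c "f ` B"] measurable_translation[of "f ` B" c] by auto
qed


lemma taylor_bound:
  fixes f f' f'' :: "real \<Rightarrow> 'a::real_normed_vector"
  assumes d1: "\<And>u. u \<in> {-r..r} \<Longrightarrow> (f has_vector_derivative f' u) (at u)"
    and d2: "\<And>u. u \<in> {-r..r} \<Longrightarrow> (f' has_vector_derivative f'' u) (at u)"
    and f0: "f 0 = 0" and f'0: "f' 0 = 0"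
    and B: "\<And>u. u \<in> {-r..r} \<Longrightarrow> norm (f'' u) \<le> B"
    and h: "\<bar>h\<bar> \<le> r"
  shows "norm (f h) \<le> B * h^2"
proof -
  have r: "0 \<le> r" using h by linarith
  have B0: "0 \<le> B" using B[of 0] r by (meson atLeastAtMost_iff neg_le_0_iff_le norm_ge_zero order_trans)
  have seg: "x \<in> {-r..r} \<and> \<bar>x\<bar> \<le> \<bar>u\<bar>" if "\<bar>u\<bar> \<le> r" "x \<in> closed_segment 0 u" for x u
    using that by (auto simp: closed_segment_eq_real_ivl split: if_splits)
  have on: "onorm (\<lambda>d. d *\<^sub>R v) = norm v" for v :: 'a
    using onorm_scaleR_left[of "\<lambda>x::real. x" v] by (simp add: onorm_id bounded_linear_ident)
  have step1: "norm (f' u) \<le> B * \<bar>u\<bar>" if u: "\<bar>u\<bar> \<le> r" for u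
  proof -
    have "norm (f' u - f' 0) \<le> B * norm (u - 0)"
    proof (rule differentiable_bound[of "closed_segment 0 u" f' "\<lambda>x d. d *\<^sub>R f'' x" B])
      show "convex (closed_segment 0 u)" by simp
      show "(f' has_derivative (\<lambda>d. d *\<^sub>R f'' x)) (at x within closed_segment 0 u)"
        if "x \<in> closed_segment 0 u" for x
        using d2[of x] seg[OF u that] has_derivative_at_withinI
        unfolding has_vector_derivative_def by blast
      show "onorm (\<lambda>d. d *\<^sub>R f'' x) \<le> B" if "x \<in> closed_segment 0 u" for x
        using on B seg[OF u that] by simp
    qed auto
    then show ?thesis using f'0 by simp
  qed
  have "norm (f h - f 0) \<le> (B * \<bar>h\<bar>) * norm (h - 0)"
  proof (rule differentiable_bound[of "closed_segment 0 h" f "\<lambda>x d. d *\<^sub>R f' x"])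
    show "convex (closed_segment 0 h)" by simp
    show "(f has_derivative (\<lambda>d. d *\<^sub>R f' x)) (at x within closed_segment 0 h)"
      if "x \<in> closed_segment 0 h" for x
      using d1[of x] seg[OF h that] has_derivative_at_withinI
      unfolding has_vector_derivative_def by blast
    show "onorm (\<lambda>d. d *\<^sub>R f' x) \<le> B * \<bar>h\<bar>" if "x \<in> closed_segment 0 h" for x
    proof -
      have "norm (f' x) \<le> B * \<bar>x\<bar>" using step1 seg[OF h that] by auto
      also have "\<dots> \<le> B * \<bar>h\<bar>" using seg[OF h that] B0 by (simp add: mult_left_mono)
      finally show ?thesis using on by simp
    qed
  qed auto
  then show ?thesis using f0 by (simp add: power2_eq_square abs_mult_self_eq)
qed

locale conv_curve =
  fixes \<Omega> :: "(real^2) set" and \<gamma> \<gamma>' \<gamma>'' :: "real \<Rightarrow> real^2"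
  assumes op: "open \<Omega>" and ne: "\<Omega> \<noteq> {}" and bd: "bounded \<Omega>" and cv: "convex \<Omega>"
    and per: "\<And>t. \<gamma> (t + 1) = \<gamma> t" and inj: "inj_on \<gamma> {0..<1}"
    and fr: "frontier \<Omega> = \<gamma> ` {0..1}"
    and d1: "\<And>t. (\<gamma> has_vector_derivative \<gamma>' t) (at t)"
    and d2: "\<And>t. (\<gamma>' has_vector_derivative \<gamma>'' t) (at t)"
    and c2: "continuous_on UNIV \<gamma>''"
    and nz: "\<And>t. \<gamma>' t \<noteq> 0"
    and curv: "\<And>t. cross2 (\<gamma>' t) (\<gamma>'' t) / norm (\<gamma>' t) ^ 3 > 0"
begin

definition T :: "real \<Rightarrow> real^2" where "T t = (1 / norm (\<gamma>' t)) *\<^sub>R \<gamma>' t"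
definition N :: "real \<Rightarrow> real^2" where "N t = - J (T t)"

lemma c1: "continuous_on UNIV \<gamma>'"
  by (rule continuous_on_vector_derivative) (use d2 in auto)

lemma c0: "continuous_on UNIV \<gamma>"
  by (rule continuous_on_vector_derivative) (use d1 in auto)

lemma cross_pos: "cross2 (\<gamma>' t) (\<gamma>'' t) > 0"
  using curv[of t] nz[of t] by (simp add: zero_less_divide_iff)

lemma normT[simp]: "norm (T t) = 1"
  using nz[of t] by (simp add: T_def)

lemma normN[simp]: "norm (N t) = 1"
  by (simp add: N_def)

lemma TN[simp]: "T t \<bullet> N t = 0" "N t \<bullet> T t = 0"
  by (simp_all add: N_def)

lemma g1N[simp]: "\<gamma>' t \<bullet> N t = 0"
  by (simp add: N_def T_def J_linear)

lemma g1T: "\<gamma>' t \<bullet> T t = norm (\<gamma>' t)"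
  by (simp add: T_def power2_norm_eq_inner[symmetric] power2_eq_square)

lemma g2N: "\<gamma>'' t \<bullet> N t = - cross2 (\<gamma>' t) (\<gamma>'' t) / norm (\<gamma>' t)"
  by (simp add: N_def T_def J_linear J_cross)

lemma J_bl: "bounded_linear J"
proof -
  have "linear J" by (rule linearI) (simp_all add: vec_eq_iff forall_2)
  then show ?thesis by (simp add: linear_conv_bounded_linear)
qed

lemma contN: "continuous_on UNIV N"
proof -
  have "continuous_on UNIV T"
    unfolding T_def using c1 nz by (intro continuous_intros) auto
  then show ?thesis unfolding N_def
    by (intro continuous_intros bounded_linear.continuous_on[OF J_bl])
qed

lemma per_m: "\<gamma> (t - 1) = \<gamma> t"
  using per[of "t - 1"] by simp

lemma fr_eq: "frontier \<Omega> = closure \<Omega> - \<Omega>"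
  using op by (simp add: frontier_def interior_open)

lemma g_fr: "t \<in> {-1..2} \<Longrightarrow> \<gamma> t \<in> frontier \<Omega>"
proof -
  assume t: "t \<in> {-1..2}"
  consider "t \<in> {0..1}" | "t \<in> {-1..<0}" | "t \<in> {1<..2}" using t by fastforce
  then show ?thesis
  proof cases
    case 1 then show ?thesis using fr by auto
  next
    case 2 then have "t + 1 \<in> {0..1}" by auto
    then show ?thesis using fr per[of t] by (metis image_eqI)
  next
    case 3 then have "t - 1 \<in> {0..1}" by auto
    then show ?thesis using fr per_m[of t] by (metis image_eqI)
  qed
qed

lemma g_cl: "t \<in> {-1..2} \<Longrightarrow> \<gamma> t \<in> closure \<Omega>"
  using g_fr fr_eq by auto

lemma fr_half: "frontier \<Omega> = \<gamma> ` {0..<1}"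
proof -
  have "\<gamma> 1 = \<gamma> 0" using per[of 0] by simp
  then have "\<gamma> 1 \<in> \<gamma> ` {0..<1}" by auto
  moreover have "{0..1::real} = insert 1 {0..<1}" by auto
  ultimately have "\<gamma> ` {0..1} = \<gamma> ` {0..<1}" by (simp add: insert_absorb)
  then show ?thesis using fr by simp
qed

lemma g_inj: assumes s: "s \<in> {0..1}" and h: "0 < h" "h < 1" shows "\<gamma> (s + h) \<noteq> \<gamma> s"
proof
  assume eq: "\<gamma> (s + h) = \<gamma> s"
  show False
  proof (cases "s + h < 1")
    case True
    have "s \<in> {0..<1}" "s + h \<in> {0..<1}" using True s h by auto
    then have "s + h = s" using inj_onD[OF inj eq] by blast
    then show False using h by simp
  next
    case False
    have e2: "\<gamma> (s + h - 1) = \<gamma> (s + h)" using per_m by simp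
    show False
    proof (cases "s < 1")
      case True
      have "s \<in> {0..<1}" "s + h - 1 \<in> {0..<1}" using True False s h by auto
      moreover have "\<gamma> (s + h - 1) = \<gamma> s" using e2 eq by simp
      ultimately have "s + h - 1 = s" using inj_onD[OF inj] by blast
      then show False using h by simp
    next
      case False
      then have s1: "s = 1" using s by auto
      have "\<gamma> s = \<gamma> 0" using per[of 0] s1 by simp
      then have "\<gamma> h = \<gamma> 0" using e2 eq s1 by simp
      moreover have "h \<in> {0..<1}" "(0::real) \<in> {0..<1}" using h by auto
      ultimately have "h = 0" using inj_onD[OF inj] by blast
      then show False using h by simp
    qed
  qed
qed

end


lemma shift_vd:
  assumes "(f has_vector_derivative v) (at (t0 + u))"
  shows "((\<lambda>u. f (t0 + u)) has_vector_derivative v) (at u)"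
proof -
  have "((\<lambda>u. t0 + u) has_vector_derivative 1) (at u)"
    by (auto intro!: derivative_eq_intros)
  from vector_diff_chain_at[OF this assms] show ?thesis by (simp add: o_def)
qed

context conv_curve begin

lemma const_m0: "\<exists>m0>0. \<forall>t\<in>{0..1}. m0 \<le> norm (\<gamma>' t)"
proof -
  have cont: "continuous_on {0..1} (\<lambda>t. norm (\<gamma>' t))"
    using c1 by (intro continuous_intros) (auto intro: continuous_on_subset)
  obtain x where "x \<in> {0..1}" "\<forall>y\<in>{0..1}. norm (\<gamma>' x) \<le> norm (\<gamma>' y)"
    using continuous_attains_inf[OF compact_Icc _ cont] by auto
  then show ?thesis using nz[of x] by (intro exI[of _ "norm (\<gamma>' x)"]) auto
qed

lemma const_M1: "\<exists>M1. \<forall>t\<in>{0..1}. norm (\<gamma>' t) \<le> M1"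
proof -
  have cont: "continuous_on {0..1} (\<lambda>t. norm (\<gamma>' t))"
    using c1 by (intro continuous_intros) (auto intro: continuous_on_subset)
  obtain x where "x \<in> {0..1}" "\<forall>y\<in>{0..1}. norm (\<gamma>' y) \<le> norm (\<gamma>' x)"
    using continuous_attains_sup[OF compact_Icc _ cont] by auto
  then show ?thesis by blast
qed

lemma const_M: "\<exists>M\<ge>1. \<forall>t\<in>{-1..2}. norm (\<gamma>'' t) \<le> M"
proof -
  have cont: "continuous_on {-1..2} (\<lambda>t. norm (\<gamma>'' t))"
    using c2 by (intro continuous_intros) (auto intro: continuous_on_subset)
  obtain x where "x \<in> {-1..2}" "\<forall>y\<in>{-1..2}. norm (\<gamma>'' y) \<le> norm (\<gamma>'' x)"
    using continuous_attains_sup[OF compact_Icc _ cont] by auto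
  then show ?thesis by (intro exI[of _ "max 1 (norm (\<gamma>'' x))"]) auto
qed

lemma const_k: "\<exists>k>0. \<forall>t\<in>{0..1}. k \<le> cross2 (\<gamma>' t) (\<gamma>'' t) / norm (\<gamma>' t)"
proof -
  have cont: "continuous_on {0..1} (\<lambda>t. cross2 (\<gamma>' t) (\<gamma>'' t) / norm (\<gamma>' t))"
    unfolding cross2_def using c1 c2 nz
    by (intro continuous_intros) (auto intro: continuous_on_subset)
  obtain x where "x \<in> {0..1}" "\<forall>y\<in>{0..1}. cross2 (\<gamma>' x) (\<gamma>'' x) / norm (\<gamma>' x) \<le> cross2 (\<gamma>' y) (\<gamma>'' y) / norm (\<gamma>' y)"
    using continuous_attains_inf[OF compact_Icc _ cont] by auto
  then show ?thesis using cross_pos[of x] nz[of x]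
    by (intro exI[of _ "cross2 (\<gamma>' x) (\<gamma>'' x) / norm (\<gamma>' x)"]) auto
qed

lemma E1:
  assumes M: "\<forall>t\<in>{-1..2}. norm (\<gamma>'' t) \<le> M" and t0: "t0 \<in> {0..1}" and u: "\<bar>u\<bar> \<le> 1"
  shows "norm (\<gamma> (t0 + u) - \<gamma> t0 - u *\<^sub>R \<gamma>' t0) \<le> M * u^2"
proof (rule taylor_bound[where f' = "\<lambda>u. \<gamma>' (t0 + u) - \<gamma>' t0" and f'' = "\<lambda>u. \<gamma>'' (t0 + u)" and r = 1])
  fix v :: real assume v: "v \<in> {-1..1}"
  show "((\<lambda>u. \<gamma> (t0 + u) - \<gamma> t0 - u *\<^sub>R \<gamma>' t0) has_vector_derivative \<gamma>' (t0 + v) - \<gamma>' t0) (at v)"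
    using shift_vd[OF d1[of "t0 + v"]]
    by (auto intro!: derivative_eq_intros)
  show "((\<lambda>u. \<gamma>' (t0 + u) - \<gamma>' t0) has_vector_derivative \<gamma>'' (t0 + v)) (at v)"
    using shift_vd[OF d2[of "t0 + v"]]
    by (auto intro!: derivative_eq_intros)
  show "norm (\<gamma>'' (t0 + v)) \<le> M" using M t0 v by auto
qed (use u in auto)

lemma E2:
  assumes e: "e > 0"
  shows "\<exists>h>0. h \<le> 1 \<and> (\<forall>t0\<in>{0..1}. \<forall>u. \<bar>u\<bar> \<le> h \<longrightarrow>
     norm (\<gamma> (t0 + u) - \<gamma> t0 - u *\<^sub>R \<gamma>' t0 - (u^2/2) *\<^sub>R \<gamma>'' t0) \<le> e * u^2)"
proof -
  have "uniformly_continuous_on {-1..2} \<gamma>''"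
    using c2 by (intro compact_uniformly_continuous) (auto intro: continuous_on_subset)
  then obtain d where d: "d > 0" and dd: "\<And>x x'. x \<in> {-1..2} \<Longrightarrow> x' \<in> {-1..2} \<Longrightarrow> dist x' x < d \<Longrightarrow> dist (\<gamma>'' x') (\<gamma>'' x) < e"
    unfolding uniformly_continuous_on_def using e by metis
  define h where "h = min (d/2) 1"
  have h: "h > 0" "h \<le> 1" "h < d" using d by (auto simp: h_def)
  have "norm (\<gamma> (t0 + u) - \<gamma> t0 - u *\<^sub>R \<gamma>' t0 - (u^2/2) *\<^sub>R \<gamma>'' t0) \<le> e * u^2"
    if t0: "t0 \<in> {0..1}" and u: "\<bar>u\<bar> \<le> h" for t0 u
  proof (rule taylor_bound[where f' = "\<lambda>u. \<gamma>' (t0 + u) - \<gamma>' t0 - u *\<^sub>R \<gamma>'' t0" and f'' = "\<lambda>u. \<gamma>'' (t0 + u) - \<gamma>'' t0" and r = h])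
    fix v :: real assume v: "v \<in> {-h..h}"
    show "((\<lambda>u. \<gamma> (t0 + u) - \<gamma> t0 - u *\<^sub>R \<gamma>' t0 - (u^2/2) *\<^sub>R \<gamma>'' t0) has_vector_derivative \<gamma>' (t0 + v) - \<gamma>' t0 - v *\<^sub>R \<gamma>'' t0) (at v)"
      using shift_vd[OF d1[of "t0 + v"]]
      by (auto intro!: derivative_eq_intros simp: power2_eq_square)
    show "((\<lambda>u. \<gamma>' (t0 + u) - \<gamma>' t0 - u *\<^sub>R \<gamma>'' t0) has_vector_derivative \<gamma>'' (t0 + v) - \<gamma>'' t0) (at v)"
      using shift_vd[OF d2[of "t0 + v"]]
      by (auto intro!: derivative_eq_intros)
    have "dist (\<gamma>'' (t0 + v)) (\<gamma>'' t0) < e"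
      using dd[of t0 "t0 + v"] t0 v h by (auto simp: dist_real_def)
    then show "norm (\<gamma>'' (t0 + v) - \<gamma>'' t0) \<le> e" by (simp add: dist_norm)
  qed (use u in auto)
  then show ?thesis using h by blast
qed

end


context conv_curve begin

lemma cl_half:
  assumes "\<forall>x\<in>\<Omega>. (x - p) \<bullet> a \<le> 0"
  shows "\<forall>x\<in>closure \<Omega>. (x - p) \<bullet> a \<le> 0"
proof -
  have e1: "(x - p) \<bullet> a = a \<bullet> x - a \<bullet> p" for x
    by (metis inner_commute inner_diff_right)
  have eq: "{x. (x - p) \<bullet> a \<le> 0} = {x. a \<bullet> x \<le> a \<bullet> p}"
    unfolding e1 by auto
  have "closure \<Omega> \<subseteq> {x. (x - p) \<bullet> a \<le> 0}"
    by (rule closure_minimal) (use assms in auto, simp add: eq closed_halfspace_le)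
  then show ?thesis by auto
qed

lemma decompE:
  "\<gamma> (t0 + u) - \<gamma> t0 = (\<gamma> (t0 + u) - \<gamma> t0 - u *\<^sub>R \<gamma>' t0 - (u^2/2) *\<^sub>R \<gamma>'' t0) + u *\<^sub>R \<gamma>' t0 + (u^2/2) *\<^sub>R \<gamma>'' t0"
  by simp

lemma inner_le_norm: "norm a = 1 \<Longrightarrow> \<bar>x \<bullet> a\<bar> \<le> norm x"
  using Cauchy_Schwarz_ineq2[of x a] by simp

lemma supp_unique:
  assumes t0: "t0 \<in> {0..1}" and a: "norm a = 1" and sup: "\<forall>x\<in>\<Omega>. (x - \<gamma> t0) \<bullet> a \<le> 0"
  shows "a = N t0"
proof -
  let ?p = "\<gamma> t0"
  have clos: "\<forall>x\<in>closure \<Omega>. (x - ?p) \<bullet> a \<le> 0" using cl_half[OF sup] .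
  have psi: "(\<gamma> (t0 + u) - ?p) \<bullet> a \<le> 0" if "\<bar>u\<bar> \<le> 1" for u
  proof -
    have "\<gamma> (t0 + u) \<in> closure \<Omega>" by (rule g_cl) (use t0 that in auto)
    then show ?thesis using clos by blast
  qed
  have der: "((\<lambda>u. (\<gamma> (t0 + u) - ?p) \<bullet> a) has_real_derivative ((\<gamma>' t0 - 0) \<bullet> a)) (at 0)"
  proof -
    have "((\<lambda>u. \<gamma> (t0 + u) - ?p) has_vector_derivative (\<gamma>' t0 - 0)) (at 0)"
      using shift_vd[of \<gamma> "\<gamma>' t0" t0 0] d1[of t0] by (auto intro!: derivative_eq_intros)
    from bounded_linear.has_vector_derivative[OF bounded_linear_inner_left this]
    show ?thesis by (simp add: has_real_derivative_iff_has_vector_derivative)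
  qed
  have g1a: "\<gamma>' t0 \<bullet> a = 0"
    using DERIV_local_max[OF der, of 1] psi by auto
  have aT: "a \<bullet> T t0 = 0" using g1a by (simp add: T_def inner_commute)
  have adec: "a = (a \<bullet> J (T t0)) *\<^sub>R J (T t0)"
    using decomp2[OF normT[of t0], of a] aT by simp
  then have "norm a = \<bar>a \<bullet> J (T t0)\<bar>" by (metis norm_J norm_scaleR normT mult.right_neutral)
  then have "a \<bullet> J (T t0) = 1 \<or> a \<bullet> J (T t0) = -1" using a by linarith
  moreover have "a \<bullet> J (T t0) \<noteq> 1"
  proof
    assume a1: "a \<bullet> J (T t0) = 1"
    then have aJ: "a = J (T t0)" using adec by simp
    obtain k where k: "k > 0" "\<forall>t\<in>{0..1}. k \<le> cross2 (\<gamma>' t) (\<gamma>'' t) / norm (\<gamma>' t)"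
      using const_k by blast
    obtain h where h: "h > 0" "h \<le> 1" and hb: "\<forall>t0\<in>{0..1}. \<forall>u. \<bar>u\<bar> \<le> h \<longrightarrow>
       norm (\<gamma> (t0 + u) - \<gamma> t0 - u *\<^sub>R \<gamma>' t0 - (u^2/2) *\<^sub>R \<gamma>'' t0) \<le> (k/4) * u^2"
      using E2[of "k/4"] k by auto
    define E where "E = \<gamma> (t0 + h) - \<gamma> t0 - h *\<^sub>R \<gamma>' t0 - (h^2/2) *\<^sub>R \<gamma>'' t0"
    have nE: "norm E \<le> (k/4) * h^2" using hb t0 h by (auto simp: E_def)
    have g2a: "\<gamma>'' t0 \<bullet> a \<ge> k"
      using k t0 g2N[of t0] by (auto simp: aJ N_def)
    have "(\<gamma> (t0 + h) - ?p) \<bullet> a = E \<bullet> a + h * (\<gamma>' t0 \<bullet> a) + (h^2/2) * (\<gamma>'' t0 \<bullet> a)"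
      unfolding E_def by (simp add: algebra_simps inner_diff_left inner_add_left)
    also have "\<dots> \<ge> - ((k/4) * h^2) + 0 + (h^2/2) * k"
    proof -
      have "\<bar>E \<bullet> a\<bar> \<le> (k/4) * h^2" using inner_le_norm[OF a, of E] nE by linarith
      moreover have "(h^2/2) * (\<gamma>'' t0 \<bullet> a) \<ge> (h^2/2) * k"
        using g2a by (intro mult_left_mono) auto
      moreover have "h * (\<gamma>' t0 \<bullet> a) = 0" using g1a by simp
      ultimately show ?thesis by linarith
    qed
    finally have f1: "(\<gamma> (t0 + h) - ?p) \<bullet> a \<ge> - ((k/4) * h^2) + 0 + (h^2/2) * k" .
    have "- ((k/4) * h^2) + 0 + (h^2/2) * k = (k/4) * h^2" by (simp add: field_simps)
    moreover have "(k/4) * h^2 > 0" using k h by simp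
    ultimately have "(\<gamma> (t0 + h) - ?p) \<bullet> a > 0" using f1 by linarith
    then show False using psi[of h] h by auto
  qed
  ultimately have "a \<bullet> J (T t0) = -1" by blast
  then show ?thesis using adec by (simp add: N_def)
qed

lemma local_bound:
  "\<exists>h0 L k. 0 < h0 \<and> h0 \<le> 1/4 \<and> k > 0 \<and> (\<forall>s\<in>{0..1}. \<forall>u. \<bar>u\<bar> \<le> h0 \<longrightarrow>
      (\<gamma> (s + u) - \<gamma> s) \<bullet> N s \<le> -(k/4) * u^2 \<and> norm (\<gamma> (s + u) - \<gamma> s) \<le> L * \<bar>u\<bar>)"
proof -
  obtain k where k: "k > 0" "\<forall>t\<in>{0..1}. k \<le> cross2 (\<gamma>' t) (\<gamma>'' t) / norm (\<gamma>' t)"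
    using const_k by blast
  obtain M1 where M1: "\<forall>t\<in>{0..1}. norm (\<gamma>' t) \<le> M1" using const_M1 by blast
  obtain M where M: "M \<ge> 1" "\<forall>t\<in>{-1..2}. norm (\<gamma>'' t) \<le> M" using const_M by blast
  define e where "e = min (k/4) 1"
  have e: "e > 0" "e \<le> k/4" "e \<le> 1" using k by (auto simp: e_def)
  obtain h where h: "h > 0" "h \<le> 1" and hb: "\<forall>t0\<in>{0..1}. \<forall>u. \<bar>u\<bar> \<le> h \<longrightarrow>
       norm (\<gamma> (t0 + u) - \<gamma> t0 - u *\<^sub>R \<gamma>' t0 - (u^2/2) *\<^sub>R \<gamma>'' t0) \<le> e * u^2"
    using E2[OF e(1)] by auto
  define h0 where "h0 = min h (1/4)"
  have h0: "0 < h0" "h0 \<le> 1/4" "h0 \<le> h" using h by (auto simp: h0_def)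
  define L where "L = M1 + M + 1"
  have main: "(\<gamma> (s + u) - \<gamma> s) \<bullet> N s \<le> -(k/4) * u^2 \<and> norm (\<gamma> (s + u) - \<gamma> s) \<le> L * \<bar>u\<bar>"
    if s: "s \<in> {0..1}" and u: "\<bar>u\<bar> \<le> h0" for s u
  proof -
    define E where "E = \<gamma> (s + u) - \<gamma> s - u *\<^sub>R \<gamma>' s - (u^2/2) *\<^sub>R \<gamma>'' s"
    have nE: "norm E \<le> e * u^2" using hb s u h0 by (auto simp: E_def)
    have dec: "\<gamma> (s + u) - \<gamma> s = E + u *\<^sub>R \<gamma>' s + (u^2/2) *\<^sub>R \<gamma>'' s" by (simp add: E_def)
    have kk: "\<gamma>'' s \<bullet> N s \<le> - k" using k s g2N[of s] by (auto simp: minus_divide_left[symmetric])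
    have "(\<gamma> (s + u) - \<gamma> s) \<bullet> N s = E \<bullet> N s + (u^2/2) * (\<gamma>'' s \<bullet> N s)"
      unfolding dec by (simp add: inner_add_left)
    also have "\<dots> \<le> e * u^2 + (u^2/2) * (-k)"
    proof -
      have "\<bar>E \<bullet> N s\<bar> \<le> e * u^2" using inner_le_norm[OF normN, of E s] nE by linarith
      moreover have "(u^2/2) * (\<gamma>'' s \<bullet> N s) \<le> (u^2/2) * (-k)"
        using kk by (intro mult_left_mono) auto
      ultimately show ?thesis by linarith
    qed
    also have "\<dots> \<le> -(k/4) * u^2"
    proof -
      have "e * u^2 \<le> (k/4) * u^2" using e by (intro mult_right_mono) auto
      then show ?thesis by (simp add: algebra_simps)
    qed
    finally have A: "(\<gamma> (s + u) - \<gamma> s) \<bullet> N s \<le> -(k/4) * u^2" .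
    have u1: "\<bar>u\<bar> \<le> 1" using u h0 by linarith
    have uu: "u^2 \<le> \<bar>u\<bar>"
    proof -
      have "\<bar>u\<bar> * \<bar>u\<bar> \<le> \<bar>u\<bar> * 1" using u1 by (intro mult_left_mono) auto
      then show ?thesis by (simp add: power2_eq_square abs_mult_self_eq)
    qed
    have "norm (\<gamma> (s + u) - \<gamma> s) \<le> norm E + norm (u *\<^sub>R \<gamma>' s) + norm ((u^2/2) *\<^sub>R \<gamma>'' s)"
      unfolding dec by (meson norm_triangle_ineq order_trans add_right_mono)
    also have "\<dots> \<le> u^2 + \<bar>u\<bar> * M1 + u^2 * M"
    proof -
      have "e * u^2 \<le> 1 * u^2" using e(3) by (intro mult_right_mono) auto
      then have "norm E \<le> u^2" using nE by linarith
      moreover have "norm (u *\<^sub>R \<gamma>' s) \<le> \<bar>u\<bar> * M1" using M1 s by (simp add: mult_left_mono)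
      moreover have "norm ((u^2/2) *\<^sub>R \<gamma>'' s) \<le> u^2 * M"
      proof -
        have "norm (\<gamma>'' s) \<le> M" using M s by auto
        then have "(u^2/2) * norm (\<gamma>'' s) \<le> (u^2/2) * M" by (intro mult_left_mono) auto
        moreover have "(u^2/2) * M \<le> u^2 * M" using M(1) by (intro mult_right_mono) auto
        ultimately have "(u^2/2) * norm (\<gamma>'' s) \<le> u^2 * M" by linarith
        then show ?thesis by simp
      qed
      ultimately show ?thesis by linarith
    qed
    also have "\<dots> \<le> L * \<bar>u\<bar>"
    proof -
      have "u^2 * M \<le> \<bar>u\<bar> * M" using uu M by (intro mult_right_mono) auto
      then show ?thesis using uu by (simp add: L_def algebra_simps)
    qed
    finally show ?thesis using A by simp
  qed
  have all: "\<forall>s\<in>{0..1}. \<forall>u. \<bar>u\<bar> \<le> h0 \<longrightarrow>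
      (\<gamma> (s + u) - \<gamma> s) \<bullet> N s \<le> -(k/4) * u^2 \<and> norm (\<gamma> (s + u) - \<gamma> s) \<le> L * \<bar>u\<bar>"
    using main by blast
  show ?thesis
    apply (rule exI[of _ h0], rule exI[of _ L], rule exI[of _ k])
    apply (intro conjI)
       apply (rule h0(1))
      apply (rule h0(2))
     apply (rule k(1))
    apply (rule all)
    done
qed

lemma supp_cl:
  assumes t0: "t0 \<in> {0..1}" and x: "x \<in> closure \<Omega>"
  shows "(x - \<gamma> t0) \<bullet> N t0 \<le> 0"
proof -
  let ?p = "\<gamma> t0"
  have pf: "?p \<in> frontier \<Omega>" using fr t0 by auto
  then have pc1: "?p \<in> closure \<Omega>" "?p \<notin> \<Omega>" using fr_eq by auto
  then have pc: "?p \<in> closure \<Omega>" "?p \<notin> rel_interior \<Omega>"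
    using rel_interior_open[OF op] by auto
  have "\<exists>a. a \<noteq> 0 \<and> (\<forall>y\<in>closure \<Omega>. a \<bullet> ?p \<le> a \<bullet> y)"
    by (rule supporting_hyperplane_relative_frontier[OF cv pc]) auto
  then obtain a where a: "a \<noteq> 0" and ha: "\<And>y. y \<in> closure \<Omega> \<Longrightarrow> a \<bullet> ?p \<le> a \<bullet> y"
    by blast
  define b where "b = - (1 / norm a) *\<^sub>R a"
  have nb: "norm b = 1" using a by (simp add: b_def)
  have hb: "(y - ?p) \<bullet> b \<le> 0" if "y \<in> closure \<Omega>" for y
  proof -
    have "0 \<le> a \<bullet> (y - ?p)" using ha[OF that] by (simp add: inner_diff_right)
    then show ?thesis using a by (simp add: b_def inner_commute)
  qed
  have "\<forall>y\<in>\<Omega>. (y - ?p) \<bullet> b \<le> 0" by (meson closure_subset subsetD hb)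
  then have "b = N t0" using supp_unique[OF t0 nb] by blast
  then show ?thesis using hb[OF x] by simp
qed

lemma supp_strict:
  assumes t0: "t0 \<in> {0..1}" and x: "x \<in> \<Omega>"
  shows "(x - \<gamma> t0) \<bullet> N t0 < 0"
proof -
  obtain e where e: "e > 0" "ball x e \<subseteq> \<Omega>" using op x open_contains_ball by blast
  have "x + (e/2) *\<^sub>R N t0 \<in> ball x e" using e by (simp add: dist_norm)
  then have "x + (e/2) *\<^sub>R N t0 \<in> closure \<Omega>" by (meson e(2) closure_subset subsetD)
  from supp_cl[OF t0 this] have s1: "(x + (e/2) *\<^sub>R N t0 - \<gamma> t0) \<bullet> N t0 \<le> 0" .
  have NN: "N t0 \<bullet> N t0 = 1" using normN[of t0] norm_eq_1 by blast
  have "(x + (e/2) *\<^sub>R N t0 - \<gamma> t0) \<bullet> N t0 = (x - \<gamma> t0) \<bullet> N t0 + (e/2) * (N t0 \<bullet> N t0)"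
    by (simp add: inner_add_left inner_diff_left)
  then have "(x - \<gamma> t0) \<bullet> N t0 + e/2 \<le> 0" using s1 NN by simp
  then show ?thesis using e by linarith
qed

end


lemma sq_bound: "norm T = 1 \<Longrightarrow> (v \<bullet> T)^2 \<le> (norm v)^2"
proof -
  assume T: "norm T = 1"
  have "\<bar>v \<bullet> T\<bar> \<le> norm v" using Cauchy_Schwarz_ineq2[of v T] T by simp
  then have "\<bar>v \<bullet> T\<bar>^2 \<le> (norm v)^2" by (intro power_mono) auto
  then show ?thesis by simp
qed

lemma convex_parab: "convex {y. ((y - p) \<bullet> T)^2 \<le> K * ((p - y) \<bullet> N)}"
proof (rule convexI)
  fix x y and u v :: real
  assume x: "x \<in> {y. ((y - p) \<bullet> T)^2 \<le> K * ((p - y) \<bullet> N)}"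
    and y: "y \<in> {y. ((y - p) \<bullet> T)^2 \<le> K * ((p - y) \<bullet> N)}"
    and u: "0 \<le> u" and v: "0 \<le> v" and uv: "u + v = 1"
  define a where "a = (x - p) \<bullet> T"
  define b where "b = (y - p) \<bullet> T"
  define c where "c = (p - x) \<bullet> N"
  define d where "d = (p - y) \<bullet> N"
  have xa: "a^2 \<le> K * c" using x by (simp add: a_def c_def)
  have yb: "b^2 \<le> K * d" using y by (simp add: b_def d_def)
  have v1: "v = 1 - u" using uv by simp
  have e1: "u *\<^sub>R x + v *\<^sub>R y - p = u *\<^sub>R (x - p) + v *\<^sub>R (y - p)"
    unfolding v1 by (simp add: algebra_simps)
  have e2: "p - (u *\<^sub>R x + v *\<^sub>R y) = u *\<^sub>R (p - x) + v *\<^sub>R (p - y)"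
    unfolding v1 by (simp add: algebra_simps)
  have iT: "(u *\<^sub>R x + v *\<^sub>R y - p) \<bullet> T = u * a + v * b"
    unfolding e1 by (simp add: inner_add_left a_def b_def)
  have iN: "(p - (u *\<^sub>R x + v *\<^sub>R y)) \<bullet> N = u * c + v * d"
    unfolding e2 by (simp add: inner_add_left c_def d_def)
  have id: "u * a^2 + v * b^2 - (u * a + v * b)^2 = u * v * (a - b)^2"
    unfolding v1 by (simp add: power2_eq_square algebra_simps)
  have "u * v * (a - b)^2 \<ge> 0" using u v by simp
  then have "(u * a + v * b)^2 \<le> u * a^2 + v * b^2" using id by linarith
  also have "\<dots> \<le> u * (K * c) + v * (K * d)"
    using xa yb u v by (intro add_mono mult_left_mono) auto
  also have "\<dots> = K * (u * c + v * d)" by (simp add: algebra_simps)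
  finally show "u *\<^sub>R x + v *\<^sub>R y \<in> {y. ((y - p) \<bullet> T)^2 \<le> K * ((p - y) \<bullet> N)}"
    using iT iN by simp
qed

context conv_curve begin

lemma strict_pos:
  assumes h0: "0 < h0" and k: "k > 0"
    and loc: "\<forall>s\<in>{0..1}. \<forall>u. \<bar>u\<bar> \<le> h0 \<longrightarrow> (\<gamma> (s + u) - \<gamma> s) \<bullet> N s \<le> -(k/4) * u^2"
    and t0: "t0 \<in> {0..1}" and h: "0 < h" "h < 1"
  shows "(\<gamma> t0 - \<gamma> (t0 + h)) \<bullet> N t0 > 0"
proof (rule ccontr)
  assume nt: "\<not> ?thesis"
  define p where "p = \<gamma> t0"
  define q where "q = \<gamma> (t0 + h)"
  have qc: "q \<in> closure \<Omega>" unfolding q_def by (rule g_cl) (use t0 h in auto)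
  have pc: "p \<in> closure \<Omega>" unfolding p_def by (rule g_cl) (use t0 in auto)
  have "(q - p) \<bullet> N t0 \<le> 0" using supp_cl[OF t0 qc] by (simp add: p_def)
  moreover have "(p - q) \<bullet> N t0 = - ((q - p) \<bullet> N t0)" by (simp add: inner_diff_left)
  ultimately have qL: "(q - p) \<bullet> N t0 = 0" using nt by (simp add: p_def q_def)
  have pq: "p \<noteq> q" using g_inj[OF t0 h] by (simp add: p_def q_def)
  have onL: "(x - p) \<bullet> N t0 = 0" if xs: "x \<in> open_segment p q" for x
  proof -
    obtain m where "x = (1 - m) *\<^sub>R p + m *\<^sub>R q" using xs unfolding in_segment(2) by blast
    then have "x - p = m *\<^sub>R (q - p)" by (simp add: algebra_simps)
    then show ?thesis using qL by simp
  qed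
  have segfr: "open_segment p q \<subseteq> \<gamma> ` {0..<1}"
  proof
    fix x assume x: "x \<in> open_segment p q"
    have "closed_segment p q \<subseteq> closure \<Omega>"
      using convex_closure[OF cv] pc qc by (simp add: convex_contains_segment)
    then have "x \<in> closure \<Omega>" using x open_closed_segment by blast
    moreover have "x \<notin> \<Omega>"
    proof
      assume "x \<in> \<Omega>"
      from supp_strict[OF t0 this] onL[OF x] show False by (simp add: p_def)
    qed
    ultimately show "x \<in> \<gamma> ` {0..<1}" using fr_eq fr_half by auto
  qed
  define S where "S = {s\<in>{0..<1}. \<gamma> s \<in> open_segment p q}"
  have "open_segment p q \<subseteq> \<gamma> ` S" using segfr by (auto simp: S_def)
  moreover have "infinite (open_segment p q)" using pq by simp
  ultimately have infS: "infinite S" by (meson finite_imageI finite_subset)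
  have "S \<subseteq> {0..1}" by (auto simp: S_def)
  then obtain x where "x \<in> {0..1}" "x islimpt S"
    using compact_eq_Bolzano_Weierstrass[of "{0..1::real}"] infS by auto
  then have inf2: "infinite (S \<inter> ball x (h0/2))" using h0 unfolding islimpt_eq_infinite_ball by simp
  then obtain s1 where s1: "s1 \<in> S \<inter> ball x (h0/2)"
    by (metis ex_in_conv finite.emptyI)
  have "infinite (S \<inter> ball x (h0/2) - {s1})" using inf2 by simp
  then obtain s2 where s2: "s2 \<in> S \<inter> ball x (h0/2) - {s1}"
    by (metis ex_in_conv finite.emptyI)
  have d: "\<bar>s2 - s1\<bar> \<le> h0"
  proof -
    have "\<bar>x - s1\<bar> * 2 < h0" "\<bar>x - s2\<bar> * 2 < h0" using s1 s2 by (auto simp: dist_real_def)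
    then show ?thesis by (simp add: abs_if split: if_splits)
  qed
  have s1S: "s1 \<in> {0..1}" "\<gamma> s1 \<in> open_segment p q" using s1 by (auto simp: S_def)
  have s2S: "\<gamma> s2 \<in> open_segment p q" "s2 \<noteq> s1" using s2 by (auto simp: S_def)
  have l1: "(\<gamma> s1 - p) \<bullet> N t0 = 0" using onL[OF s1S(2)] .
  have l2: "(\<gamma> s2 - p) \<bullet> N t0 = 0" using onL[OF s2S(1)] .
  have "\<forall>y\<in>\<Omega>. (y - \<gamma> s1) \<bullet> N t0 \<le> 0"
  proof
    fix y assume y: "y \<in> \<Omega>"
    have "(y - \<gamma> s1) \<bullet> N t0 = (y - p) \<bullet> N t0 - (\<gamma> s1 - p) \<bullet> N t0"
      by (simp add: inner_diff_left)
    then show "(y - \<gamma> s1) \<bullet> N t0 \<le> 0" using supp_strict[OF t0 y] l1 by (simp add: p_def)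
  qed
  then have n1: "N t0 = N s1" using supp_unique[OF s1S(1) normN] by blast
  have "(\<gamma> (s1 + (s2 - s1)) - \<gamma> s1) \<bullet> N s1 \<le> -(k/4) * (s2 - s1)^2"
    using loc s1S(1) d by blast
  then have c1: "(\<gamma> s2 - \<gamma> s1) \<bullet> N t0 \<le> -(k/4) * (s2 - s1)^2" using n1 by simp
  have "(\<gamma> s2 - \<gamma> s1) \<bullet> N t0 = (\<gamma> s2 - p) \<bullet> N t0 - (\<gamma> s1 - p) \<bullet> N t0"
    by (simp add: inner_diff_left)
  then have c2: "(\<gamma> s2 - \<gamma> s1) \<bullet> N t0 = 0" using l1 l2 by simp
  have "(s2 - s1)^2 > 0" using s2S(2) by simp
  then have "(k/4) * (s2 - s1)^2 > 0" using k by simp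
  then show False using c1 c2 by linarith
qed

lemma min_c2:
  assumes h0: "0 < h0" "h0 \<le> 1/4"
    and strict: "\<And>t0 h. t0 \<in> {0..1} \<Longrightarrow> 0 < h \<Longrightarrow> h < 1 \<Longrightarrow> (\<gamma> t0 - \<gamma> (t0 + h)) \<bullet> N t0 > 0"
  shows "\<exists>c2>0. \<forall>t0\<in>{0..1}. \<forall>h\<in>{h0..1-h0}. c2 \<le> (\<gamma> t0 - \<gamma> (t0 + h)) \<bullet> N t0"
proof -
  define K where "K = {0..1::real} \<times> {h0..1-h0}"
  define F where "F = (\<lambda>z::real\<times>real. (\<gamma> (fst z) - \<gamma> (fst z + snd z)) \<bullet> N (fst z))"
  have a: "continuous_on K (\<lambda>z. \<gamma> (fst z))"
    by (rule continuous_on_compose2[OF c0]) (auto intro: continuous_intros)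
  have b: "continuous_on K (\<lambda>z. \<gamma> (fst z + snd z))"
    by (rule continuous_on_compose2[OF c0]) (auto intro!: continuous_on_add continuous_on_fst continuous_on_snd continuous_on_id)
  have c: "continuous_on K (\<lambda>z. N (fst z))"
    by (rule continuous_on_compose2[OF contN]) (auto intro: continuous_intros)
  have cont: "continuous_on K F" unfolding F_def using a b c by (intro continuous_intros)
  have cK: "compact K" unfolding K_def by (intro compact_Times compact_Icc)
  have neK: "K \<noteq> {}" using h0 by (auto simp: K_def)
  have "\<exists>z\<in>K. \<forall>y\<in>K. F z \<le> F y" using continuous_attains_inf[OF cK neK cont] .
  then obtain z where z: "z \<in> K" "\<forall>y\<in>K. F z \<le> F y" by blast
  have "F z > 0" using z(1) h0 strict[of "fst z" "snd z"] by (auto simp: K_def F_def)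
  then show ?thesis using z(2) unfolding K_def F_def
    by (intro exI[of _ "F z"]) (auto simp: F_def)
qed

end


context conv_curve begin

lemma fr_cases:
  assumes h0: "0 < h0" "h0 \<le> 1/4" and t0: "t0 \<in> {0..1}" and t: "t \<in> {0..1}"
  shows "(\<exists>u. \<bar>u\<bar> \<le> h0 \<and> \<gamma> t = \<gamma> (t0 + u)) \<or> (\<exists>h\<in>{h0..1-h0}. \<gamma> t = \<gamma> (t0 + h))"
proof -
  consider "\<bar>t - t0\<bar> \<le> h0" | "h0 < t - t0 \<and> t - t0 \<le> 1 - h0" | "1 - h0 < t - t0"
    | "-1 + h0 \<le> t - t0 \<and> t - t0 < -h0" | "t - t0 < -1 + h0" by linarith
  then show ?thesis
  proof cases
    case 1 then show ?thesis by (intro disjI1 exI[of _ "t - t0"]) auto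
  next
    case 2 then show ?thesis by (intro disjI2 bexI[of _ "t - t0"]) auto
  next
    case 3
    have "\<gamma> (t0 + (t - t0 - 1)) = \<gamma> t" using per_m[of t] by simp
    moreover have "\<bar>t - t0 - 1\<bar> \<le> h0" using 3 t t0 by auto
    ultimately show ?thesis by (intro disjI1 exI[of _ "t - t0 - 1"]) auto
  next
    case 4
    have "\<gamma> (t0 + (t - t0 + 1)) = \<gamma> t" using per[of t] by simp
    moreover have "t - t0 + 1 \<in> {h0..1-h0}" using 4 by auto
    ultimately show ?thesis by (intro disjI2 bexI[of _ "t - t0 + 1"]) auto
  next
    case 5
    have "\<gamma> (t0 + (t - t0 + 1)) = \<gamma> t" using per[of t] by simp
    moreover have "\<bar>t - t0 + 1\<bar> \<le> h0" using 5 t t0 by auto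
    ultimately show ?thesis by (intro disjI1 exI[of _ "t - t0 + 1"]) auto
  qed
qed

lemma frontier_closure_sub: "frontier (closure \<Omega>) \<subseteq> frontier \<Omega>"
  using interior_mono[OF closure_subset[of \<Omega>]] by (auto simp: frontier_def)

lemma parabola:
  "\<exists>K>0. \<forall>t0\<in>{0..1}. \<forall>x\<in>\<Omega>. ((x - \<gamma> t0) \<bullet> T t0)^2 \<le> K * ((\<gamma> t0 - x) \<bullet> N t0)"
proof -
  obtain h0 L k where h0: "0 < h0" "h0 \<le> 1/4" and k: "k > 0" and loc: "\<forall>s\<in>{0..1}. \<forall>u. \<bar>u\<bar> \<le> h0 \<longrightarrow>
      (\<gamma> (s + u) - \<gamma> s) \<bullet> N s \<le> -(k/4) * u^2 \<and> norm (\<gamma> (s + u) - \<gamma> s) \<le> L * \<bar>u\<bar>"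
    using local_bound by blast
  have loc1: "\<forall>s\<in>{0..1}. \<forall>u. \<bar>u\<bar> \<le> h0 \<longrightarrow> (\<gamma> (s + u) - \<gamma> s) \<bullet> N s \<le> -(k/4) * u^2"
    using loc by blast
  have strict: "\<And>t0 h. t0 \<in> {0..1} \<Longrightarrow> 0 < h \<Longrightarrow> h < 1 \<Longrightarrow> (\<gamma> t0 - \<gamma> (t0 + h)) \<bullet> N t0 > 0"
    using strict_pos[OF h0(1) k loc1] by blast
  obtain c2 where c2: "c2 > 0" "\<forall>t0\<in>{0..1}. \<forall>h\<in>{h0..1-h0}. c2 \<le> (\<gamma> t0 - \<gamma> (t0 + h)) \<bullet> N t0"
    using min_c2[OF h0 strict] by blast
  have "bounded (closure \<Omega>)" using bd by (rule bounded_closure)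
  then obtain B where B: "B > 0" "\<forall>x\<in>closure \<Omega>. norm x \<le> B" unfolding bounded_pos by blast
  define D where "D = 2 * B"
  have Dd: "norm (x - y) \<le> D" if "x \<in> closure \<Omega>" "y \<in> closure \<Omega>" for x y
  proof -
    have "norm x \<le> B" "norm y \<le> B" using B that by auto
    then show ?thesis using norm_triangle_ineq4[of x y] by (simp add: D_def)
  qed
  have D0: "D > 0" using B by (simp add: D_def)
  define K where "K = max (4 * L^2 / k) (D^2 / c2)"
  have K1: "4 * L^2 / k \<le> K" and K2: "D^2 / c2 \<le> K" by (auto simp: K_def)
  have Kpos: "K > 0" using K2 D0 c2 by (smt (verit) divide_pos_pos zero_less_power)
  have fpt: "((q - \<gamma> t0) \<bullet> T t0)^2 \<le> K * ((\<gamma> t0 - q) \<bullet> N t0)"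
    if t0: "t0 \<in> {0..1}" and q: "q \<in> frontier \<Omega>" for t0 q
  proof -
    obtain t where t: "t \<in> {0..1}" "q = \<gamma> t" using q fr by auto
    have pc: "\<gamma> t0 \<in> closure \<Omega>" using fr fr_eq t0 by auto
    have qc: "q \<in> closure \<Omega>" using q fr_eq by auto
    have sq: "((q - \<gamma> t0) \<bullet> T t0)^2 \<le> (norm (q - \<gamma> t0))^2" using sq_bound[OF normT] .
    have nn: "(\<gamma> t0 - q) \<bullet> N t0 \<ge> 0"
    proof -
      have "(q - \<gamma> t0) \<bullet> N t0 \<le> 0" using supp_cl[OF t0 qc] .
      moreover have "(\<gamma> t0 - q) \<bullet> N t0 = - ((q - \<gamma> t0) \<bullet> N t0)" by (simp add: inner_diff_left)
      ultimately show ?thesis by linarith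
    qed
    from fr_cases[OF h0 t0 t(1)]
    show ?thesis
    proof
      assume "\<exists>u. \<bar>u\<bar> \<le> h0 \<and> \<gamma> t = \<gamma> (t0 + u)"
      then obtain u where u: "\<bar>u\<bar> \<le> h0" "q = \<gamma> (t0 + u)" using t by auto
      have A: "(q - \<gamma> t0) \<bullet> N t0 \<le> -(k/4) * u^2" and Bn: "norm (q - \<gamma> t0) \<le> L * \<bar>u\<bar>"
        using loc t0 u by auto
      have "(norm (q - \<gamma> t0))^2 \<le> (L * \<bar>u\<bar>)^2" using Bn by (intro power_mono) auto
      also have "\<dots> = (4 * L^2 / k) * ((k/4) * u^2)" using k by (simp add: power_mult_distrib field_simps)
      also have "\<dots> \<le> (4 * L^2 / k) * ((\<gamma> t0 - q) \<bullet> N t0)"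
      proof (rule mult_left_mono)
        have "(\<gamma> t0 - q) \<bullet> N t0 = - ((q - \<gamma> t0) \<bullet> N t0)" by (simp add: inner_diff_left)
        then show "(k/4) * u^2 \<le> (\<gamma> t0 - q) \<bullet> N t0" using A by linarith
        show "0 \<le> 4 * L^2 / k" using k by simp
      qed
      also have "\<dots> \<le> K * ((\<gamma> t0 - q) \<bullet> N t0)" using K1 nn by (intro mult_right_mono) auto
      finally show ?thesis using sq by linarith
    next
      assume "\<exists>h\<in>{h0..1-h0}. \<gamma> t = \<gamma> (t0 + h)"
      then obtain h where h: "h \<in> {h0..1-h0}" "q = \<gamma> (t0 + h)" using t by auto
      have F: "c2 \<le> (\<gamma> t0 - q) \<bullet> N t0" using c2 t0 h by auto
      have "(norm (q - \<gamma> t0))^2 \<le> D^2" using Dd[OF qc pc] by (intro power_mono) auto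
      also have "\<dots> = (D^2 / c2) * c2" using c2 by simp
      also have "\<dots> \<le> (D^2 / c2) * ((\<gamma> t0 - q) \<bullet> N t0)" using F c2 by (intro mult_left_mono) auto
      also have "\<dots> \<le> K * ((\<gamma> t0 - q) \<bullet> N t0)" using K2 nn by (intro mult_right_mono) auto
      finally show ?thesis using sq by linarith
    qed
  qed
  have "\<forall>t0\<in>{0..1}. \<forall>x\<in>\<Omega>. ((x - \<gamma> t0) \<bullet> T t0)^2 \<le> K * ((\<gamma> t0 - x) \<bullet> N t0)"
  proof (intro ballI)
    fix t0 :: real and x assume t0: "t0 \<in> {0..1}" and x: "x \<in> \<Omega>"
    define P where "P = {y. ((y - \<gamma> t0) \<bullet> T t0)^2 \<le> K * ((\<gamma> t0 - y) \<bullet> N t0)}"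
    have cP: "convex P" unfolding P_def by (rule convex_parab)
    have "frontier \<Omega> \<subseteq> P" using fpt[OF t0] by (auto simp: P_def)
    then have "frontier (closure \<Omega>) \<subseteq> P" using frontier_closure_sub by blast
    then have "convex hull (frontier (closure \<Omega>)) \<subseteq> P" using cP by (simp add: hull_minimal)
    moreover have "closure \<Omega> = convex hull (frontier (closure \<Omega>))"
      by (rule Krein_Milman_frontier) (use cv bd in \<open>auto simp: compact_closure\<close>)
    ultimately have "closure \<Omega> \<subseteq> P" by simp
    then show "((x - \<gamma> t0) \<bullet> T t0)^2 \<le> K * ((\<gamma> t0 - x) \<bullet> N t0)"
      using x closure_subset by (auto simp: P_def)
  qed
  then show ?thesis using Kpos by blast
qed

end


lemma img_eq: fixes z :: "real^2" shows "(\<lambda>w. z - w) ` S = (\<lambda>x. z + x) ` (uminus ` S)"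
  unfolding image_image by (rule image_cong) simp_all

lemma mem_refl: fixes z :: "real^2" shows "x \<in> (\<lambda>w. z - w) ` S \<longleftrightarrow> z - x \<in> S"
proof
  assume "x \<in> (\<lambda>w. z - w) ` S"
  then obtain w where w: "w \<in> S" "x = z - w" by auto
  then have "z - x = w" by (simp add: algebra_simps)
  then show "z - x \<in> S" using w by simp
next
  assume "z - x \<in> S"
  then show "x \<in> (\<lambda>w. z - w) ` S" by (rule rev_image_eqI) simp
qed

lemma inter_lmeas:
  fixes S :: "(real^2) set"
  assumes "open S" "bounded S"
  shows "S \<inter> (\<lambda>w. z - w) ` S \<in> lmeasurable"
proof -
  have "open ((\<lambda>w. z - w) ` S)" unfolding img_eq
    using assms by (intro open_translation open_negations)
  then have "open (S \<inter> (\<lambda>w. z - w) ` S)" using assms by auto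
  moreover have "bounded (S \<inter> (\<lambda>w. z - w) ` S)" using assms by auto
  ultimately show ?thesis by (intro lmeasurable_open)
qed

context conv_curve begin

lemma nearest:
  assumes w: "w \<in> \<Omega>"
  shows "\<exists>t0\<in>{0..1}. 0 < infdist w (frontier \<Omega>) \<and> \<gamma> t0 = w + infdist w (frontier \<Omega>) *\<^sub>R N t0
           \<and> ball w (infdist w (frontier \<Omega>)) \<subseteq> \<Omega>"
proof -
  define F where "F = frontier \<Omega>"
  have Fc: "closed F" by (simp add: F_def frontier_closed)
  have Fne: "F \<noteq> {}" using fr by (auto simp: F_def)
  have "\<exists>p\<in>F. \<forall>y\<in>F. dist w p \<le> dist w y"
    by (rule distance_attains_inf[OF Fc Fne, where a = w]) auto
  then obtain p where p: "p \<in> F" "\<And>y. y \<in> F \<Longrightarrow> dist w p \<le> dist w y" by blast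
  define \<delta> where "\<delta> = infdist w F"
  have dle: "\<delta> \<le> dist w p" using infdist_le[OF p(1)] by (simp add: \<delta>_def)
  have dge: "dist w p \<le> \<delta>" unfolding \<delta>_def infdist_notempty[OF Fne]
    by (rule cINF_greatest) (use Fne p in auto)
  have dd: "\<delta> = dist w p" using dle dge by simp
  have wnF: "w \<notin> F" using w fr_eq by (auto simp: F_def)
  then have pw: "p \<noteq> w" using p by auto
  then have dpos: "\<delta> > 0" using dd by simp
  have pnO: "p \<notin> \<Omega>" using p(1) fr_eq by (auto simp: F_def)
  have ball: "ball w \<delta> \<subseteq> \<Omega>"
  proof
    fix y assume y: "y \<in> ball w \<delta>"
    show "y \<in> \<Omega>"
    proof (rule ccontr)
      assume yn: "y \<notin> \<Omega>"
      have "w \<in> ball w \<delta> \<inter> \<Omega>" using w dpos by simp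
      then have "ball w \<delta> \<inter> \<Omega> \<noteq> {}" by blast
      moreover have "ball w \<delta> - \<Omega> \<noteq> {}" using y yn by auto
      ultimately have "ball w \<delta> \<inter> frontier \<Omega> \<noteq> {}"
        using connected_Int_frontier[OF connected_ball] by blast
      then obtain f where f: "f \<in> ball w \<delta>" "f \<in> F" by (auto simp: F_def)
      have "\<delta> \<le> dist w f" using infdist_le[OF f(2)] by (simp add: \<delta>_def)
      then show False using f(1) by simp
    qed
  qed
  have supp: "(x - p) \<bullet> (p - w) \<le> 0" if x: "x \<in> \<Omega>" for x
  proof (rule ccontr)
    assume "\<not> (x - p) \<bullet> (p - w) \<le> 0"
    then have kk: "(x - p) \<bullet> (p - w) > 0" by simp
    define a where "a = p - w"
    define b where "b = p - x"
    define kp where "kp = (x - p) \<bullet> (p - w)"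
    have ab: "a \<bullet> b = - kp" by (simp add: a_def b_def kp_def inner_diff_left inner_diff_right inner_commute algebra_simps)
    have xp: "x \<noteq> p" using x pnO by auto
    then have bb: "b \<bullet> b > 0" by (simp add: b_def)
    define l where "l = kp / (b \<bullet> b)"
    have l: "l > 0" using kk bb by (simp add: l_def kp_def)
    have lbb: "l * (b \<bullet> b) = kp" using bb by (simp add: l_def)
    define y where "y = p + l *\<^sub>R b"
    have yw: "y - w = a + l *\<^sub>R b" by (simp add: y_def a_def)
    have "(y - w) \<bullet> (y - w) = a \<bullet> a + 2 * l * (a \<bullet> b) + l * (l * (b \<bullet> b))"
      unfolding yw by (simp add: inner_add_left inner_add_right inner_commute algebra_simps)
    also have "\<dots> = a \<bullet> a - l * kp" using ab lbb by (simp add: algebra_simps)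
    finally have "(y - w) \<bullet> (y - w) < a \<bullet> a" using l kk by (simp add: kp_def)
    then have "norm (y - w) < norm a" by (simp add: norm_eq_sqrt_inner)
    moreover have "norm a = \<delta>" using dd by (simp add: a_def dist_norm norm_minus_commute)
    ultimately have "y \<in> ball w \<delta>" by (simp add: dist_norm norm_minus_commute)
    then have yO: "y \<in> \<Omega>" using ball by blast
    have "(1 + l) *\<^sub>R p = y + l *\<^sub>R x" by (simp add: y_def b_def algebra_simps)
    then have pe: "(1 / (1 + l)) *\<^sub>R ((1 + l) *\<^sub>R p) = (1 / (1 + l)) *\<^sub>R (y + l *\<^sub>R x)" by simp
    have "(1 / (1 + l)) *\<^sub>R ((1 + l) *\<^sub>R p) = p" using l by simp
    moreover have "(1 / (1 + l)) *\<^sub>R (y + l *\<^sub>R x) = (1 / (1 + l)) *\<^sub>R y + (l / (1 + l)) *\<^sub>R x"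
      by (simp add: scaleR_add_right)
    ultimately have "p = (1 / (1 + l)) *\<^sub>R y + (l / (1 + l)) *\<^sub>R x" using pe by simp
    moreover have "(1 / (1 + l)) *\<^sub>R y + (l / (1 + l)) *\<^sub>R x \<in> \<Omega>"
      using convexD[OF cv yO x] l by (simp add: add_divide_distrib[symmetric])
    ultimately show False using pnO by simp
  qed
  obtain t0 where t0: "t0 \<in> {0..1}" "p = \<gamma> t0" using p(1) fr by (auto simp: F_def)
  define a where "a = (1 / \<delta>) *\<^sub>R (p - w)"
  have na: "norm a = 1" using dd dpos by (simp add: a_def dist_norm norm_minus_commute)
  have "\<forall>x\<in>\<Omega>. (x - \<gamma> t0) \<bullet> a \<le> 0"
  proof
    fix x assume x: "x \<in> \<Omega>"
    have "(x - \<gamma> t0) \<bullet> a = ((x - p) \<bullet> (p - w)) / \<delta>" using t0(2) by (simp add: a_def)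
    then show "(x - \<gamma> t0) \<bullet> a \<le> 0" using supp[OF x] dpos by (simp add: divide_nonpos_pos)
  qed
  then have "a = N t0" using supp_unique[OF t0(1) na] by blast
  then have "\<delta> *\<^sub>R ((1 / \<delta>) *\<^sub>R (p - w)) = \<delta> *\<^sub>R N t0" by (simp add: a_def)
  then have "p - w = \<delta> *\<^sub>R N t0" using dpos by simp
  then have "\<gamma> t0 = w + \<delta> *\<^sub>R N t0" using t0(2) by (simp add: algebra_simps)
  then show ?thesis using t0 dpos ball by (auto simp: \<delta>_def F_def)
qed

end


lemma norm_sq_decomp:
  assumes T: "norm (T::real^2) = 1"
  shows "(norm v)^2 = (v \<bullet> T)^2 + (v \<bullet> J T)^2"
proof -
  have TT: "T$1*T$1 + T$2*T$2 = 1" using T by (metis inner2 norm_eq_1)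
  have "(norm v)^2 = v \<bullet> v" by (simp add: power2_norm_eq_inner)
  also have "\<dots> = (v \<bullet> T)^2 + (v \<bullet> J T)^2"
    unfolding inner2 power2_eq_square by simp (use TT in algebra)
  finally show ?thesis .
qed

lemma rect_sym: "x \<in> rect w T a b \<Longrightarrow> 2 *\<^sub>R w - x \<in> rect w T a b"
proof -
  assume x: "x \<in> rect w T a b"
  have eq: "2 *\<^sub>R w - x - w = - (x - w)" by (simp add: algebra_simps scaleR_2)
  have e1: "(2 *\<^sub>R w - x - w) \<bullet> T = - ((x - w) \<bullet> T)" unfolding eq by (simp only: inner_minus_left)
  have e2: "(2 *\<^sub>R w - x - w) \<bullet> J T = - ((x - w) \<bullet> J T)" unfolding eq by (simp only: inner_minus_left)
  show ?thesis unfolding rect_def mem_Collect_eq e1 e2 using x by (simp add: rect_def)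
qed

lemma seg_pt:
  assumes cv: "convex S" and w: "w \<in> S" and c: "w + c *\<^sub>R v \<in> S" and s: "0 \<le> s / c" "s / c \<le> 1" and c0: "c \<noteq> 0"
  shows "w + s *\<^sub>R v \<in> S"
proof -
  have "(1 - s / c) *\<^sub>R w + (s / c) *\<^sub>R (w + c *\<^sub>R v) \<in> S"
    using convexD[OF cv w c] s by simp
  moreover have "(1 - s / c) *\<^sub>R w + (s / c) *\<^sub>R (w + c *\<^sub>R v) = w + s *\<^sub>R v"
    using c0 by (simp add: algebra_simps)
  ultimately show ?thesis by simp
qed

context conv_curve begin

lemma decompTN: "v = (v \<bullet> T t) *\<^sub>R T t + (v \<bullet> N t) *\<^sub>R N t"
  using decomp2[OF normT[of t], of v] by (simp add: N_def)

lemma NN: "N t \<bullet> N t = 1" using normN[of t] norm_eq_1 by blast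

lemma cov_ge_rect:
  fixes V :: "real^2"
  assumes sub: "rect w V a b \<subseteq> \<Omega>" and V: "norm V = 1" and a: "0 \<le> a" and b: "0 \<le> b"
  shows "4 * a * b \<le> covariogram \<Omega> (2 *\<^sub>R w)"
proof -
  have "rect w V a b \<subseteq> \<Omega> \<inter> (\<lambda>v. 2 *\<^sub>R w - v) ` \<Omega>"
  proof
    fix x assume x: "x \<in> rect w V a b"
    have "2 *\<^sub>R w - x \<in> \<Omega>" using rect_sym[OF x] sub by blast
    then show "x \<in> \<Omega> \<inter> (\<lambda>v. 2 *\<^sub>R w - v) ` \<Omega>" using x sub by (auto simp: mem_refl)
  qed
  moreover have "\<Omega> \<inter> (\<lambda>v. 2 *\<^sub>R w - v) ` \<Omega> \<in> lmeasurable" by (rule inter_lmeas[OF op bd])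
  ultimately have "measure lebesgue (rect w V a b) \<le> measure lebesgue (\<Omega> \<inter> (\<lambda>v. 2 *\<^sub>R w - v) ` \<Omega>)"
    using rect_measure[OF V a b] by (intro measure_mono_fmeasurable) auto
  then show ?thesis using rect_measure[OF V a b] by (simp add: covariogram_def)
qed

lemma cov_upper:
  assumes Kp: "K > 0" and K: "\<forall>t0\<in>{0..1}. \<forall>x\<in>\<Omega>. ((x - \<gamma> t0) \<bullet> T t0)^2 \<le> K * ((\<gamma> t0 - x) \<bullet> N t0)"
    and t0: "t0 \<in> {0..1}" and dpos: "0 < \<delta>" and p: "\<gamma> t0 = w + \<delta> *\<^sub>R N t0"
  shows "covariogram \<Omega> (2 *\<^sub>R w) \<le> 4 * sqrt (2 * K * \<delta>) * \<delta>"
proof -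
  define A where "A = \<Omega> \<inter> (\<lambda>v. 2 *\<^sub>R w - v) ` \<Omega>"
  define R where "R = rect w (T t0) (sqrt (2 * K * \<delta>)) \<delta>"
  have sub: "A \<subseteq> R"
  proof
    fix x assume x: "x \<in> A"
    then have xO: "x \<in> \<Omega>" and vO: "2 *\<^sub>R w - x \<in> \<Omega>" by (auto simp: A_def mem_refl)
    have e1: "(x - \<gamma> t0) \<bullet> N t0 = (x - w) \<bullet> N t0 - \<delta>"
      using p NN[of t0] by (simp add: inner_diff_left inner_add_left)
    have e2: "(2 *\<^sub>R w - x - \<gamma> t0) \<bullet> N t0 = - ((x - w) \<bullet> N t0) - \<delta>"
      using p NN[of t0] by (simp add: inner_diff_left inner_add_left scaleR_2 algebra_simps)
    have s1: "(x - \<gamma> t0) \<bullet> N t0 < 0" using supp_strict[OF t0 xO] .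
    have s2: "(2 *\<^sub>R w - x - \<gamma> t0) \<bullet> N t0 < 0" using supp_strict[OF t0 vO] .
    have aN: "\<bar>(x - w) \<bullet> N t0\<bar> \<le> \<delta>" using s1 s2 e1 e2 by linarith
    have eT: "(x - w) \<bullet> T t0 = (x - \<gamma> t0) \<bullet> T t0"
      using p by (simp add: inner_diff_left inner_add_left)
    have e3: "(\<gamma> t0 - x) \<bullet> N t0 = - ((x - \<gamma> t0) \<bullet> N t0)" by (simp add: inner_diff_left)
    have "((x - w) \<bullet> T t0)^2 \<le> K * ((\<gamma> t0 - x) \<bullet> N t0)" using K t0 xO eT by simp
    also have "\<dots> \<le> K * (2 * \<delta>)"
    proof -
      have "(\<gamma> t0 - x) \<bullet> N t0 \<le> 2 * \<delta>" using e1 e3 aN by linarith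
      then show ?thesis by (rule mult_left_mono) (use Kp in auto)
    qed
    finally have "\<bar>(x - w) \<bullet> T t0\<bar>^2 \<le> 2 * K * \<delta>" by simp
    then have aT: "\<bar>(x - w) \<bullet> T t0\<bar> \<le> sqrt (2 * K * \<delta>)" by (rule real_le_rsqrt)
    have "(x - w) \<bullet> J (T t0) = - ((x - w) \<bullet> N t0)" by (simp add: N_def)
    then show "x \<in> R" using aT aN by (simp add: R_def rect_def)
  qed
  have d0: "0 \<le> sqrt (2 * K * \<delta>)" using Kp dpos by simp
  have "A \<in> lmeasurable" unfolding A_def by (rule inter_lmeas[OF op bd])
  then have "measure lebesgue A \<le> measure lebesgue R"
    using rect_measure[OF normT d0, of \<delta> w t0] dpos sub unfolding R_def
    by (intro measure_mono_fmeasurable) auto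
  then show ?thesis using rect_measure[OF normT d0, of \<delta> w t0] dpos
    by (simp add: covariogram_def A_def R_def)
qed

end


context conv_curve begin

lemma side:
  assumes m0p: "0 < m0" and m0: "\<forall>t\<in>{0..1}. m0 \<le> norm (\<gamma>' t)" and M: "\<forall>t\<in>{-1..2}. norm (\<gamma>'' t) \<le> M"
    and t0: "t0 \<in> {0..1}" and dpos: "0 < \<delta>" and p: "\<gamma> t0 = w + \<delta> *\<^sub>R N t0"
    and ball: "ball w \<delta> \<subseteq> \<Omega>"
    and h: "0 < h" "h \<le> 1" "M * h^2 = \<delta>/2" "M * h \<le> m0/2"
    and sg: "\<sigma> = 1 \<or> \<sigma> = -1"
  shows "\<exists>\<tau>. h * m0 / 6 \<le> \<tau> \<and> w + (\<sigma> * \<tau>) *\<^sub>R T t0 \<in> \<Omega>"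
proof -
  define u where "u = \<sigma> * h"
  have uh: "\<bar>u\<bar> = h" "u^2 = h^2" "\<sigma> * u = h" "\<sigma> * \<sigma> = 1" using sg h by (auto simp: u_def)
  define q where "q = \<gamma> (t0 + u)"
  have tu: "t0 + u \<in> {-1..2}" using t0 uh h by auto
  have qc: "q \<in> closure \<Omega>" unfolding q_def using g_cl[OF tu] .
  have qf: "q \<notin> \<Omega>" unfolding q_def using g_fr[OF tu] fr_eq by auto
  define E where "E = q - \<gamma> t0 - u *\<^sub>R \<gamma>' t0"
  have nE: "norm E \<le> \<delta>/2"
  proof -
    have "norm E \<le> M * u^2" unfolding E_def q_def by (rule E1[OF M t0]) (use uh h in auto)
    then show ?thesis using uh h by simp
  qed
  have qw: "q - w = E + u *\<^sub>R \<gamma>' t0 + \<delta> *\<^sub>R N t0" using p by (simp add: E_def algebra_simps)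
  define A where "A = (q - w) \<bullet> T t0"
  define B where "B = (q - w) \<bullet> N t0"
  have Aeq: "A = E \<bullet> T t0 + u * norm (\<gamma>' t0)"
    unfolding A_def qw by (simp add: inner_add_left g1T)
  have Beq: "B = E \<bullet> N t0 + \<delta>"
    unfolding B_def qw by (simp add: inner_add_left NN)
  have ET: "\<bar>E \<bullet> T t0\<bar> \<le> \<delta>/2" using inner_le_norm[OF normT, of E t0] nE by linarith
  have EN: "\<bar>E \<bullet> N t0\<bar> \<le> \<delta>/2" using inner_le_norm[OF normN, of E t0] nE by linarith
  have sA: "\<sigma> * A \<ge> h * m0 / 2"
  proof -
    have e: "\<sigma> * A = \<sigma> * (E \<bullet> T t0) + h * norm (\<gamma>' t0)"
      using uh by (simp add: Aeq algebra_simps)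
    have "\<bar>\<sigma> * (E \<bullet> T t0)\<bar> = \<bar>E \<bullet> T t0\<bar>" using sg by auto
    then have a1: "\<sigma> * (E \<bullet> T t0) \<ge> - (\<delta>/2)" using ET by linarith
    have a2: "h * norm (\<gamma>' t0) \<ge> h * m0" using m0 t0 h by (intro mult_left_mono) auto
    have a3: "\<delta>/2 \<le> (m0/2) * h"
    proof -
      have "(M * h) * h \<le> (m0/2) * h" using h by (intro mult_right_mono) auto
      then show ?thesis using h(3) by (simp add: power2_eq_square algebra_simps)
    qed
    show ?thesis using e a1 a2 a3 by (simp add: algebra_simps)
  qed
  have Bl: "B \<ge> \<delta>/2" using Beq EN by linarith
  have Bu: "B \<le> \<delta>"
  proof -
    have "(q - \<gamma> t0) \<bullet> N t0 \<le> 0" using supp_cl[OF t0 qc] .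
    moreover have "B = (q - \<gamma> t0) \<bullet> N t0 + \<delta>" unfolding B_def using p NN[of t0]
      by (simp add: inner_diff_left inner_add_left)
    ultimately show ?thesis by linarith
  qed
  define y where "y = w - (\<delta>/2) *\<^sub>R N t0"
  have yO: "y \<in> \<Omega>"
  proof -
    have "dist w y = \<delta>/2" using dpos by (simp add: y_def dist_norm)
    then have "y \<in> ball w \<delta>" using dpos by simp
    then show ?thesis using ball by blast
  qed
  define l where "l = (\<delta>/2) / (B + \<delta>/2)"
  have Bp: "B + \<delta>/2 > 0" using Bl dpos by linarith
  have l0: "0 < l" using dpos Bp by (simp add: l_def)
  have l1: "l < 1" using dpos Bp Bl by (simp add: l_def divide_less_eq)
  have l3: "1/3 \<le> l"
  proof -
    have "B + \<delta>/2 \<le> 3 * (\<delta>/2)" using Bu by linarith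
    then have "(\<delta>/2) / (3 * (\<delta>/2)) \<le> (\<delta>/2) / (B + \<delta>/2)"
      using Bp dpos by (intro divide_left_mono) auto
    then show ?thesis using dpos by (simp add: l_def)
  qed
  have lB: "l * (B + \<delta>/2) = \<delta>/2" unfolding l_def using Bp by (simp add: field_simps)
  define x where "x = (1 - l) *\<^sub>R y + l *\<^sub>R q"
  have yq: "y \<noteq> q" using yO qf by auto
  have xs: "x \<in> open_segment y q" unfolding in_segment(2) x_def using yq l0 l1 by blast
  have xO: "x \<in> \<Omega>"
    using in_interior_closure_convex_segment[OF cv _ qc, of y] yO xs interior_open[OF op] by auto
  have cc: "(\<delta> * l / 2) + ((\<delta> - \<delta> * l) / 2) = \<delta>/2" by (simp add: field_simps)
  have "x - w = l *\<^sub>R (q - w) - ((1 - l) * (\<delta>/2)) *\<^sub>R N t0"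
    by (simp add: x_def y_def algebra_simps)
  also have "\<dots> = l *\<^sub>R (A *\<^sub>R T t0 + B *\<^sub>R N t0) - ((1 - l) * (\<delta>/2)) *\<^sub>R N t0"
    using decompTN[of "q - w" t0] by (simp add: A_def B_def)
  also have "\<dots> = (l * A) *\<^sub>R T t0 + (l * (B + \<delta>/2) - \<delta>/2) *\<^sub>R N t0"
    by (simp add: algebra_simps) (metis cc scaleR_add_left)
  also have "\<dots> = (l * A) *\<^sub>R T t0" using lB by simp
  finally have xw: "x = w + (l * A) *\<^sub>R T t0" by (simp add: algebra_simps)
  define \<tau> where "\<tau> = l * (\<sigma> * A)"
  have st: "\<sigma> * \<tau> = l * A" using uh(4) by (simp add: \<tau>_def algebra_simps)
  have hm: "0 \<le> h * m0 / 2" using h m0p by simp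
  have "(1/3) * (h * m0 / 2) \<le> l * (h * m0 / 2)" by (rule mult_right_mono) (use l3 hm in auto)
  also have "\<dots> \<le> l * (\<sigma> * A)" by (rule mult_left_mono) (use sA l0 in auto)
  finally have "(1/3) * (h * m0 / 2) \<le> l * (\<sigma> * A)" .
  then have "h * m0 / 6 \<le> \<tau>" by (simp add: \<tau>_def)
  moreover have "w + (\<sigma> * \<tau>) *\<^sub>R T t0 \<in> \<Omega>" using xO xw st by simp
  ultimately show ?thesis by blast
qed

end


lemma powr32: "0 \<le> (x::real) \<Longrightarrow> x powr (3/2) = x * sqrt x"
proof -
  assume x: "0 \<le> x"
  have "x powr (3/2) = x powr (1 + 1/2)" by simp
  also have "\<dots> = x powr 1 * x powr (1/2)" by (rule powr_add)
  also have "\<dots> = x * sqrt x" using x by (simp add: powr_half_sqrt)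
  finally show ?thesis .
qed

context conv_curve begin

lemma cov_lower_small:
  assumes m0p: "0 < m0" and m0: "\<forall>t\<in>{0..1}. m0 \<le> norm (\<gamma>' t)"
    and M: "\<forall>t\<in>{-1..2}. norm (\<gamma>'' t) \<le> M"
    and t0: "t0 \<in> {0..1}" and dpos: "0 < \<delta>" and p: "\<gamma> t0 = w + \<delta> *\<^sub>R N t0"
    and ball: "ball w \<delta> \<subseteq> \<Omega>"
    and h: "0 < h" "h \<le> 1" "M * h^2 = \<delta>/2" "M * h \<le> m0/2"
  shows "h * m0 * \<delta> / 12 \<le> covariogram \<Omega> (2 *\<^sub>R w)"
proof -
  define \<alpha> where "\<alpha> = h * m0 / 6"
  have a0: "\<alpha> > 0" using h m0p by (simp add: \<alpha>_def)
  obtain \<tau>1 where t1: "h * m0 / 6 \<le> \<tau>1" "w + (1 * \<tau>1) *\<^sub>R T t0 \<in> \<Omega>"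
    using side[OF m0p m0 M t0 dpos p ball h, of 1] by auto
  obtain \<tau>2 where t2: "h * m0 / 6 \<le> \<tau>2" "w + (-1 * \<tau>2) *\<^sub>R T t0 \<in> \<Omega>"
    using side[OF m0p m0 M t0 dpos p ball h, of "-1"] by auto
  have wO: "w \<in> \<Omega>" using ball dpos by auto
  have line: "w + s *\<^sub>R T t0 \<in> \<Omega>" if s: "\<bar>s\<bar> \<le> \<alpha>" for s
  proof (cases "0 \<le> s")
    case True
    have c: "w + \<tau>1 *\<^sub>R T t0 \<in> \<Omega>" using t1 by simp
    have tp: "\<tau>1 > 0" using t1 a0 \<alpha>_def by linarith
    show ?thesis
    proof (rule seg_pt[OF cv wO c])
      show "0 \<le> s / \<tau>1" using True tp by simp
      show "s / \<tau>1 \<le> 1" using s True tp t1 \<alpha>_def by (simp add: divide_le_eq)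
      show "\<tau>1 \<noteq> 0" using tp by simp
    qed
  next
    case False
    have c: "w + (- \<tau>2) *\<^sub>R T t0 \<in> \<Omega>" using t2 by simp
    have tp: "\<tau>2 > 0" using t2 a0 \<alpha>_def by linarith
    show ?thesis
    proof (rule seg_pt[OF cv wO c])
      show "0 \<le> s / (- \<tau>2)" using False tp by (simp add: divide_nonpos_pos)
      show "s / (- \<tau>2) \<le> 1" using s False tp t2 \<alpha>_def by (simp add: divide_le_eq le_divide_eq)
      show "- \<tau>2 \<noteq> 0" using tp by simp
    qed
  qed
  have sub: "rect w (T t0) (\<alpha>/2) (\<delta>/4) \<subseteq> \<Omega>"
  proof
    fix x assume x: "x \<in> rect w (T t0) (\<alpha>/2) (\<delta>/4)"
    define s where "s = (x - w) \<bullet> T t0"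
    define r where "r = (x - w) \<bullet> J (T t0)"
    have sr: "\<bar>s\<bar> \<le> \<alpha>/2" "\<bar>r\<bar> \<le> \<delta>/4" using x by (auto simp: rect_def s_def r_def)
    have "x - w = s *\<^sub>R T t0 + r *\<^sub>R J (T t0)"
      using decomp2[OF normT[of t0], of "x - w"] by (simp add: s_def r_def)
    then have dec: "x = w + s *\<^sub>R T t0 + r *\<^sub>R J (T t0)" by (simp add: algebra_simps)
    define a1 where "a1 = w + (2 * s) *\<^sub>R T t0"
    define a2 where "a2 = w + (2 * r) *\<^sub>R J (T t0)"
    have a1O: "a1 \<in> \<Omega>" unfolding a1_def by (rule line) (use sr in auto)
    have "dist w a2 = 2 * \<bar>r\<bar>" by (simp add: a2_def dist_norm)
    then have "a2 \<in> ball w \<delta>" using sr dpos by simp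
    then have a2O: "a2 \<in> \<Omega>" using ball by blast
    have "(1/2) *\<^sub>R a1 + (1/2) *\<^sub>R a2 \<in> \<Omega>" using convexD[OF cv a1O a2O] by simp
    moreover have "(1/2) *\<^sub>R a1 + (1/2) *\<^sub>R a2 = x"
      unfolding dec a1_def a2_def by (simp add: vec_eq_iff forall_2 field_simps)
    ultimately show "x \<in> \<Omega>" by simp
  qed
  have "4 * (\<alpha>/2) * (\<delta>/4) \<le> covariogram \<Omega> (2 *\<^sub>R w)"
    by (rule cov_ge_rect[OF sub normT]) (use a0 dpos in auto)
  then show ?thesis by (simp add: \<alpha>_def)
qed

end


lemma dist2: "dist ((2::real) *\<^sub>R a) (2 *\<^sub>R b) = 2 * dist a (b :: real^2)"
proof -
  have "2 *\<^sub>R a - 2 *\<^sub>R b = 2 *\<^sub>R (a - b)" by (simp add: scaleR_diff_right)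
  then show ?thesis by (simp add: dist_norm)
qed

context conv_curve begin

lemma closD: "\<exists>D>0. \<forall>x\<in>closure \<Omega>. \<forall>y\<in>closure \<Omega>. norm (x - y) \<le> D"
proof -
  have "bounded (closure \<Omega>)" using bd by (rule bounded_closure)
  then obtain B where B: "B > 0" "\<forall>x\<in>closure \<Omega>. norm x \<le> B" unfolding bounded_pos by blast
  have "norm (x - y) \<le> 2 * B" if "x \<in> closure \<Omega>" "y \<in> closure \<Omega>" for x y
  proof -
    have "norm x \<le> B" "norm y \<le> B" using B that by auto
    then show ?thesis using norm_triangle_ineq4[of x y] by simp
  qed
  then show ?thesis using B by (intro exI[of _ "2 * B"]) auto
qed

lemma bounds_all:
  "\<exists>c0 C0. c0 > 0 \<and> C0 > 0 \<and> (\<forall>w\<in>\<Omega>.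
     c0 * (infdist w (frontier \<Omega>) * sqrt (infdist w (frontier \<Omega>))) \<le> covariogram \<Omega> (2 *\<^sub>R w) \<and>
     covariogram \<Omega> (2 *\<^sub>R w) \<le> C0 * (infdist w (frontier \<Omega>) * sqrt (infdist w (frontier \<Omega>))))"
proof -
  obtain m0 where m0: "m0 > 0" "\<forall>t\<in>{0..1}. m0 \<le> norm (\<gamma>' t)" using const_m0 by blast
  obtain M where M: "M \<ge> 1" "\<forall>t\<in>{-1..2}. norm (\<gamma>'' t) \<le> M" using const_M by blast
  obtain K where K: "K > 0" "\<forall>t0\<in>{0..1}. \<forall>x\<in>\<Omega>. ((x - \<gamma> t0) \<bullet> T t0)^2 \<le> K * ((\<gamma> t0 - x) \<bullet> N t0)"
    using parabola by blast
  obtain D where D: "D > 0" "\<forall>x\<in>closure \<Omega>. \<forall>y\<in>closure \<Omega>. norm (x - y) \<le> D" using closD by blast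
  define d0 where "d0 = min (2 * M) (m0^2 / (2 * M))"
  have d0p: "d0 > 0" using M m0 by (simp add: d0_def)
  define c0 where "c0 = min (m0 / (12 * sqrt (2 * M))) (d0^2 / (D * sqrt D))"
  have c0p: "c0 > 0" using m0 M D d0p by (simp add: c0_def)
  define C0 where "C0 = 4 * sqrt (2 * K)"
  have C0p: "C0 > 0" using K by (simp add: C0_def)
  have main: "c0 * (infdist w (frontier \<Omega>) * sqrt (infdist w (frontier \<Omega>))) \<le> covariogram \<Omega> (2 *\<^sub>R w) \<and>
     covariogram \<Omega> (2 *\<^sub>R w) \<le> C0 * (infdist w (frontier \<Omega>) * sqrt (infdist w (frontier \<Omega>)))"
    if w: "w \<in> \<Omega>" for w
  proof -
    define \<delta> where "\<delta> = infdist w (frontier \<Omega>)"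
    obtain t0 where t0: "t0 \<in> {0..1}" and dpos: "0 < \<delta>" and p: "\<gamma> t0 = w + \<delta> *\<^sub>R N t0"
      and ball: "ball w \<delta> \<subseteq> \<Omega>"
      using nearest[OF w] unfolding \<delta>_def by blast
    have up: "covariogram \<Omega> (2 *\<^sub>R w) \<le> C0 * (\<delta> * sqrt \<delta>)"
    proof -
      have "covariogram \<Omega> (2 *\<^sub>R w) \<le> 4 * sqrt (2 * K * \<delta>) * \<delta>"
        by (rule cov_upper[OF K t0 dpos p])
      also have "\<dots> = C0 * (\<delta> * sqrt \<delta>)" by (simp add: C0_def real_sqrt_mult)
      finally show ?thesis .
    qed
    have dD: "\<delta> \<le> D"
    proof -
      have "\<gamma> t0 \<in> closure \<Omega>" by (rule g_cl) (use t0 in auto)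
      moreover have "w \<in> closure \<Omega>" using w closure_subset by blast
      ultimately have "norm (\<gamma> t0 - w) \<le> D" using D by blast
      then show ?thesis using p dpos by simp
    qed
    have lo: "c0 * (\<delta> * sqrt \<delta>) \<le> covariogram \<Omega> (2 *\<^sub>R w)"
    proof (cases "\<delta> \<le> d0")
      case True
      define h where "h = sqrt (\<delta> / (2 * M))"
      have hp: "0 < h" using dpos M by (simp add: h_def)
      have h1: "h \<le> 1"
      proof -
        have "\<delta> / (2 * M) \<le> 1" using True M by (simp add: d0_def divide_le_eq)
        then show ?thesis by (simp add: h_def)
      qed
      have h2: "M * h^2 = \<delta>/2" using dpos M by (simp add: h_def)
      have h3: "M * h \<le> m0/2"
      proof -
        have "\<delta> \<le> m0^2 / (2 * M)" using True by (simp add: d0_def)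
        then have "\<delta> / (2 * M) \<le> (m0 / (2 * M))^2" using M
          by (simp add: power_divide divide_le_eq field_simps power2_eq_square)
        then have "h \<le> sqrt ((m0 / (2 * M))^2)" unfolding h_def by (rule real_sqrt_le_mono)
        also have "\<dots> = m0 / (2 * M)" using m0 M by simp
        finally have "h \<le> m0 / (2 * M)" .
        then have "M * h \<le> M * (m0 / (2 * M))" using M by (intro mult_left_mono) auto
        then show ?thesis using M by simp
      qed
      have "h * m0 * \<delta> / 12 \<le> covariogram \<Omega> (2 *\<^sub>R w)"
        by (rule cov_lower_small[OF m0 M(2) t0 dpos p ball hp h1 h2 h3])
      moreover have "h * m0 * \<delta> / 12 = (m0 / (12 * sqrt (2 * M))) * (\<delta> * sqrt \<delta>)"
        by (simp add: h_def real_sqrt_divide algebra_simps)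
      moreover have "c0 * (\<delta> * sqrt \<delta>) \<le> (m0 / (12 * sqrt (2 * M))) * (\<delta> * sqrt \<delta>)"
        using dpos by (intro mult_right_mono) (auto simp: c0_def)
      ultimately show ?thesis by linarith
    next
      case False
      have sub: "rect w (T t0) (d0/2) (d0/2) \<subseteq> \<Omega>"
      proof
        fix x assume x: "x \<in> rect w (T t0) (d0/2) (d0/2)"
        have ab: "\<bar>(x - w) \<bullet> T t0\<bar> \<le> d0/2" "\<bar>(x - w) \<bullet> J (T t0)\<bar> \<le> d0/2" using x by (auto simp: rect_def)
        have "((x - w) \<bullet> T t0)^2 \<le> (d0/2)^2" using ab(1) by (metis abs_le_square_iff abs_of_nonneg d0p half_gt_zero less_imp_le)
        moreover have "((x - w) \<bullet> J (T t0))^2 \<le> (d0/2)^2" using ab(2) by (metis abs_le_square_iff abs_of_nonneg d0p half_gt_zero less_imp_le)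
        ultimately have "(norm (x - w))^2 \<le> 2 * (d0/2)^2" using norm_sq_decomp[OF normT[of t0], of "x - w"] by linarith
        also have "\<dots> < \<delta>^2" using False d0p by (simp add: power2_eq_square field_simps) (smt (verit) mult_strict_mono)
        finally have n2: "(norm (x - w))^2 < \<delta>^2" .
        have "norm (x - w) < \<delta>" by (rule power_less_imp_less_base[OF n2]) (use dpos in simp)
        then have "x \<in> ball w \<delta>" by (simp add: dist_norm norm_minus_commute)
        then show "x \<in> \<Omega>" using ball by blast
      qed
      have c1: "4 * (d0/2) * (d0/2) \<le> covariogram \<Omega> (2 *\<^sub>R w)"
        by (rule cov_ge_rect[OF sub normT]) (use d0p in auto)
      have "\<delta> * sqrt \<delta> \<le> D * sqrt D" using dD dpos by (intro mult_mono real_sqrt_le_mono) auto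
      then have XD: "\<delta> * sqrt \<delta> \<le> D * sqrt D" .
      have "c0 * (\<delta> * sqrt \<delta>) \<le> (d0^2 / (D * sqrt D)) * (\<delta> * sqrt \<delta>)"
        by (rule mult_right_mono) (use dpos in \<open>auto simp: c0_def\<close>)
      also have "\<dots> \<le> (d0^2 / (D * sqrt D)) * (D * sqrt D)"
        by (rule mult_left_mono[OF XD]) (use D in simp)
      finally have "c0 * (\<delta> * sqrt \<delta>) \<le> (d0^2 / (D * sqrt D)) * (D * sqrt D)" .
      also have "\<dots> = d0^2" using D by simp
      finally show ?thesis using c1 by (simp add: power2_eq_square)
    qed
    show ?thesis using up lo by (simp add: \<delta>_def)
  qed
  show ?thesis
    apply (rule exI[of _ c0], rule exI[of _ C0])
    using c0p C0p main by blast
qed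

lemma scale_infdist:
  assumes w: "w \<in> \<Omega>"
  shows "infdist (2 *\<^sub>R w) (frontier (scale2 \<Omega>)) = 2 * infdist w (frontier \<Omega>)"
proof -
  have inj: "inj ((*\<^sub>R) (2::real) :: real^2 \<Rightarrow> real^2)" by (rule injI) simp
  have op2: "open (scale2 \<Omega>)" unfolding scale2_def using op by (intro open_scaling) auto
  have frs: "frontier (scale2 \<Omega>) = (*\<^sub>R) 2 ` frontier \<Omega>"
  proof -
    have "frontier (scale2 \<Omega>) = closure (scale2 \<Omega>) - scale2 \<Omega>"
      using op2 by (simp add: frontier_def interior_open)
    also have "\<dots> = (*\<^sub>R) 2 ` closure \<Omega> - (*\<^sub>R) 2 ` \<Omega>" by (simp add: scale2_def closure_scaleR)
    also have "\<dots> = (*\<^sub>R) 2 ` (closure \<Omega> - \<Omega>)" by (simp add: image_set_diff[OF inj])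
    finally show ?thesis using fr_eq by simp
  qed
  define \<delta> where "\<delta> = infdist w (frontier \<Omega>)"
  obtain t0 where t0: "t0 \<in> {0..1}" and dpos: "0 < \<delta>" and p: "\<gamma> t0 = w + \<delta> *\<^sub>R N t0"
    using nearest[OF w] unfolding \<delta>_def by blast
  have pF: "\<gamma> t0 \<in> frontier \<Omega>" using fr t0 by auto
  have dp: "dist w (\<gamma> t0) = \<delta>" using p dpos by (simp add: dist_norm)
  have Fne: "(*\<^sub>R) 2 ` frontier \<Omega> \<noteq> {}" using pF by auto
  have le: "infdist (2 *\<^sub>R w) ((*\<^sub>R) 2 ` frontier \<Omega>) \<le> 2 * \<delta>"
  proof -
    have "2 *\<^sub>R \<gamma> t0 \<in> (*\<^sub>R) 2 ` frontier \<Omega>" using pF by auto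
    from infdist_le[OF this, of "2 *\<^sub>R w"] show ?thesis using dp by (simp add: dist2)
  qed
  have ge: "2 * \<delta> \<le> infdist (2 *\<^sub>R w) ((*\<^sub>R) 2 ` frontier \<Omega>)"
    unfolding infdist_notempty[OF Fne]
  proof (rule cINF_greatest)
    show "(*\<^sub>R) 2 ` frontier \<Omega> \<noteq> {}" by (rule Fne)
    fix y assume "y \<in> (*\<^sub>R) 2 ` frontier \<Omega>"
    then obtain x where x: "x \<in> frontier \<Omega>" "y = 2 *\<^sub>R x" by auto
    have "\<delta> \<le> dist w x" using infdist_le[OF x(1)] by (simp add: \<delta>_def)
    then show "2 * \<delta> \<le> dist (2 *\<^sub>R w) y" using x by (simp add: dist2)
  qed
  show ?thesis using le ge frs by (simp add: \<delta>_def)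
qed

lemma cov_le_meas: "covariogram \<Omega> y \<le> measure lebesgue \<Omega>"
proof -
  have "\<Omega> \<in> lmeasurable" using bd op by (rule lmeasurable_open)
  moreover have "\<Omega> \<inter> (\<lambda>w. y - w) ` \<Omega> \<in> lmeasurable" by (rule inter_lmeas[OF op bd])
  ultimately show ?thesis unfolding covariogram_def
    by (intro measure_mono_fmeasurable) auto
qed

lemma final:
  "\<exists>c C. c > 0 \<and> C > 0 \<and>
    (\<forall>z \<in> scale2 \<Omega>.
       c * infdist z (frontier (scale2 \<Omega>)) powr (3/2) \<le> omega \<Omega> z \<and>
       omega \<Omega> z \<le> C * infdist z (frontier (scale2 \<Omega>)) powr (3/2))"
proof -
  obtain c0 C0 where c0: "c0 > 0" and C0: "C0 > 0" and bnd: "\<forall>w\<in>\<Omega>.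
     c0 * (infdist w (frontier \<Omega>) * sqrt (infdist w (frontier \<Omega>))) \<le> covariogram \<Omega> (2 *\<^sub>R w) \<and>
     covariogram \<Omega> (2 *\<^sub>R w) \<le> C0 * (infdist w (frontier \<Omega>) * sqrt (infdist w (frontier \<Omega>)))"
    using bounds_all by blast
  obtain w0 where w0: "w0 \<in> \<Omega>" using ne by blast
  define S0 where "S0 = covariogram \<Omega> (2 *\<^sub>R w0)"
  have S0p: "S0 > 0"
  proof -
    obtain t0 where "0 < infdist w0 (frontier \<Omega>)" using nearest[OF w0] by blast
    then have "0 < c0 * (infdist w0 (frontier \<Omega>) * sqrt (infdist w0 (frontier \<Omega>)))" using c0 by simp
    then show ?thesis using bnd w0 unfolding S0_def by (meson order_less_le_trans)
  qed
  define S where "S = (SUP y. covariogram \<Omega> y)"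
  have bdd: "bdd_above (range (covariogram \<Omega>))" using cov_le_meas by (intro bdd_aboveI2) 
  have SS0: "S0 \<le> S" unfolding S_def S0_def by (rule cSUP_upper[OF UNIV_I bdd])
  have Sm: "S \<le> measure lebesgue \<Omega>" unfolding S_def by (rule cSUP_least) (auto simp: cov_le_meas)
  have Sp: "S > 0" using S0p SS0 by linarith
  define mO where "mO = measure lebesgue \<Omega>"
  have mOp: "mO > 0" using Sp Sm by (simp add: mO_def)
  define c where "c = c0 / (2 * sqrt 2 * mO)"
  define C where "C = C0 / (2 * sqrt 2 * S0)"
  have cp: "c > 0" using c0 mOp by (simp add: c_def)
  have Cp: "C > 0" using C0 S0p by (simp add: C_def)
  have "c * infdist z (frontier (scale2 \<Omega>)) powr (3/2) \<le> omega \<Omega> z \<and>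
       omega \<Omega> z \<le> C * infdist z (frontier (scale2 \<Omega>)) powr (3/2)" if z: "z \<in> scale2 \<Omega>" for z
  proof -
    obtain w where w: "w \<in> \<Omega>" "z = 2 *\<^sub>R w" using z by (auto simp: scale2_def)
    define \<delta> where "\<delta> = infdist w (frontier \<Omega>)"
    have dpos: "0 < \<delta>" using nearest[OF w(1)] by (auto simp: \<delta>_def)
    define X where "X = \<delta> * sqrt \<delta>"
    have Xp: "X > 0" using dpos by (simp add: X_def)
    have pw: "infdist z (frontier (scale2 \<Omega>)) powr (3/2) = 2 * sqrt 2 * X"
    proof -
      have "infdist z (frontier (scale2 \<Omega>)) = 2 * \<delta>" using scale_infdist[OF w(1)] w(2) by (simp add: \<delta>_def)
      then show ?thesis using dpos by (simp add: powr32 X_def real_sqrt_mult)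
    qed
    define g where "g = covariogram \<Omega> z"
    have glo: "c0 * X \<le> g" and gup: "g \<le> C0 * X" using bnd w by (auto simp: g_def X_def \<delta>_def)
    have gp: "g > 0" using glo c0 Xp by (smt (verit) mult_pos_pos)
    have om: "omega \<Omega> z = g / S" by (simp add: omega_def g_def S_def)
    have lo: "c * (2 * sqrt 2 * X) \<le> g / S"
    proof -
      have "c * (2 * sqrt 2 * X) = c0 * X / mO" by (simp add: c_def)
      also have "\<dots> \<le> g / mO" using glo mOp by (simp add: divide_right_mono)
      also have "\<dots> \<le> g / S" using gp Sp Sm by (simp add: mO_def frac_le)
      finally show ?thesis .
    qed
    have hi: "g / S \<le> C * (2 * sqrt 2 * X)"
    proof -
      have "g / S \<le> g / S0" using gp S0p SS0 by (simp add: frac_le)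
      also have "\<dots> \<le> C0 * X / S0" using gup S0p by (simp add: divide_right_mono)
      also have "\<dots> = C * (2 * sqrt 2 * X)" by (simp add: C_def)
      finally show ?thesis .
    qed
    show ?thesis using lo hi pw om by simp
  qed
  then show ?thesis using cp Cp by blast
qed

end

theorem mainTheorem18:
  fixes \<Omega> :: "(real^2) set"
  assumes "open \<Omega>" and "\<Omega> \<noteq> {}" and "bounded \<Omega>" and "convex \<Omega>"
    and "C2_pos_curv_boundary \<Omega>"
  shows "\<exists>c C. c > 0 \<and> C > 0 \<and>
    (\<forall>z \<in> scale2 \<Omega>.
       c * infdist z (frontier (scale2 \<Omega>)) powr (3/2) \<le> omega \<Omega> z \<and>
       omega \<Omega> z \<le> C * infdist z (frontier (scale2 \<Omega>)) powr (3/2))"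
proof -
  obtain \<gamma> \<gamma>' \<gamma>'' :: "real \<Rightarrow> real^2" where g: "\<forall>t. \<gamma> (t + 1) = \<gamma> t" "inj_on \<gamma> {0..<1}"
    "frontier \<Omega> = \<gamma> ` {0..1}" "\<forall>t. (\<gamma> has_vector_derivative \<gamma>' t) (at t)"
    "\<forall>t. (\<gamma>' has_vector_derivative \<gamma>'' t) (at t)" "continuous_on UNIV \<gamma>''"
    "\<forall>t. \<gamma>' t \<noteq> 0" "\<forall>t. cross2 (\<gamma>' t) (\<gamma>'' t) / norm (\<gamma>' t) ^ 3 > 0"
    using assms(5) unfolding C2_pos_curv_boundary_def by blast
  interpret conv_curve \<Omega> \<gamma> \<gamma>' \<gamma>''
    by unfold_locales (use assms g in auto)
  show ?thesis by (rule final)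
qed

end
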